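(* Consider the smooth system $\mathbf{X}'=\Phi_2(\mathbf{X})$ on $\mathbb{R}^3_+$. (i) If $\mathcal{N}_M<1$, then $\mathbf{E}_0=(0,0,0)$ is locally asymptotically stable. (ii) If $\mathcal{N}_M>1$ and $\theta_M>1$ (equivalently $\frac{(1-r)\rho}{\delta}>\mathcal{N}_M>1$), then the positive equilibrium $\mathbf{E}_2^*$ is locally asymptotically stable and $\mathbf{E}_0$ is unstable; however, $\mathbf{E}_0$ is not a repeller: there exists a trajectory (other than the equilibrium itself) converging to $\mathbf{E}_0$.
   Context: Parameters: $r\in(0,1)$, $\rho,\sigma,\mu,\delta,\nu,\eta>0$, $\gamma\ge1$, $\mu\ge\delta$. $\Phi_2(M,A,U)=\big(r\rho Ue^{-\sigma(M+A+U)}-\mu M,\ (1-r)\rho Ue^{-\sigma(M+A+U)}-\nu\gamma M+\eta U-\delta A,\ \nu\gamma M-\eta U-\delta U\big)$. $\mathcal{N}_M:=\frac{\gamma r\rho\nu}{\mu(\delta+\eta)}$, $\theta_M:=\frac{(1-r)\mu(\delta+\eta)}{\gamma r\delta\nu}$, and $\mathbf{E}_2^*=(M_2^*,A_2^*,U_2^* )$ with $M_2^*=\frac{\delta+\eta}{\gamma\nu\theta_M+\eta+\delta}\frac1\sigma\ln\mathcal{N}_M$, $A_2^*=\frac{\gamma\nu(\theta_M-1)}{\gamma\nu\theta_M+\eta+\delta}\frac1\sigma\ln\mathcal{N}_M$, $U_2^*=\frac{\gamma\nu}{\gamma\nu\theta_M+\eta+\delta}\frac1\sigma\ln\mathcal{N}_M$.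 *)

theory Defs
  imports "HOL-Analysis.Analysis"
begin

definition Phi2 :: "real \<Rightarrow> real \<Rightarrow> real \<Rightarrow> real \<Rightarrow> real \<Rightarrow> real \<Rightarrow> real \<Rightarrow> real
    \<Rightarrow> real \<times> real \<times> real \<Rightarrow> real \<times> real \<times> real" where
  "Phi2 r \<rho> \<sigma> \<mu> \<delta> \<nu> \<eta> \<gamma> X = (case X of (M, A, U) \<Rightarrow>
     (r * \<rho> * U * exp (- \<sigma> * (M + A + U)) - \<mu> * M,
      (1 - r) * \<rho> * U * exp (- \<sigma> * (M + A + U)) - \<nu> * \<gamma> * M + \<eta> * U - \<delta> * A,
      \<nu> * \<gamma> * M - \<eta> * U - \<delta> * U))"

definition N_M :: "real \<Rightarrow> real \<Rightarrow> real \<Rightarrow> real \<Rightarrow> real \<Rightarrow> real \<Rightarrow> real \<Rightarrow> real" where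
  "N_M r \<rho> \<mu> \<delta> \<nu> \<eta> \<gamma> = (\<gamma> * r * \<rho> * \<nu>) / (\<mu> * (\<delta> + \<eta>))"

definition theta_M :: "real \<Rightarrow> real \<Rightarrow> real \<Rightarrow> real \<Rightarrow> real \<Rightarrow> real \<Rightarrow> real" where
  "theta_M r \<mu> \<delta> \<nu> \<eta> \<gamma> = ((1 - r) * \<mu> * (\<delta> + \<eta>)) / (\<gamma> * r * \<delta> * \<nu>)"

definition E2 :: "real \<Rightarrow> real \<Rightarrow> real \<Rightarrow> real \<Rightarrow> real \<Rightarrow> real \<Rightarrow> real \<Rightarrow> real
    \<Rightarrow> real \<times> real \<times> real" where
  "E2 r \<rho> \<sigma> \<mu> \<delta> \<nu> \<eta> \<gamma> =
     (let N = N_M r \<rho> \<mu> \<delta> \<nu> \<eta> \<gamma>; th = theta_M r \<mu> \<delta> \<nu> \<eta> \<gamma>;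
          D = \<gamma> * \<nu> * th + \<eta> + \<delta>; L = ln N / \<sigma>
      in ((\<delta> + \<eta>) / D * L, \<gamma> * \<nu> * (th - 1) / D * L, \<gamma> * \<nu> / D * L))"

definition orthant :: "(real \<times> real \<times> real) set" where
  "orthant = {(M, A, U). M \<ge> 0 \<and> A \<ge> 0 \<and> U \<ge> 0}"

definition is_sol :: "('a::real_normed_vector \<Rightarrow> 'a) \<Rightarrow> (real \<Rightarrow> 'a) \<Rightarrow> real set \<Rightarrow> bool" where
  "is_sol F x I \<longleftrightarrow> is_interval I \<and> 0 \<in> I \<and> I \<subseteq> {0..} \<and>
     (\<forall>t\<in>I. (x has_vector_derivative F (x t)) (at t within I))"

definition equilibrium :: "('a::real_normed_vector \<Rightarrow> 'a) \<Rightarrow> 'a \<Rightarrow> bool" where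
  "equilibrium F e \<longleftrightarrow> F e = 0"

definition stable_in :: "'a set \<Rightarrow> ('a::real_normed_vector \<Rightarrow> 'a) \<Rightarrow> 'a \<Rightarrow> bool" where
  "stable_in S F e \<longleftrightarrow> (\<forall>\<epsilon>>0. \<exists>d>0. \<forall>x I. is_sol F x I \<and> x 0 \<in> S \<and> dist (x 0) e < d
       \<longrightarrow> (\<forall>t\<in>I. dist (x t) e < \<epsilon>))"

definition attractive_in :: "'a set \<Rightarrow> ('a::real_normed_vector \<Rightarrow> 'a) \<Rightarrow> 'a \<Rightarrow> bool" where
  "attractive_in S F e \<longleftrightarrow> (\<exists>d>0. \<forall>y\<in>S. dist y e < d \<longrightarrow>
       (\<exists>x. is_sol F x {0..} \<and> x 0 = y) \<and>
       (\<forall>x. is_sol F x {0..} \<and> x 0 = y \<longrightarrow> (x \<longlongrightarrow> e) at_top))"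

definition loc_asym_stable_in :: "'a set \<Rightarrow> ('a::real_normed_vector \<Rightarrow> 'a) \<Rightarrow> 'a \<Rightarrow> bool" where
  "loc_asym_stable_in S F e \<longleftrightarrow> equilibrium F e \<and> stable_in S F e \<and> attractive_in S F e"

end

theory Submission
  imports Defs "HOL-Analysis.Analysis"
begin

lemma integral_pow_real:
  assumes "(0::real) \<le> t"
  shows "integral {0..t} (\<lambda>s. s ^ n) = t ^ Suc n / Suc n"
proof -
  have "((\<lambda>s. s ^ n) has_integral (t ^ Suc n / Suc n - 0 ^ Suc n / Suc n)) {0..t}"
  proof (rule fundamental_theorem_of_calculus[OF assms])
    fix x assume "x \<in> {0..t}"
    have "((\<lambda>s. s ^ Suc n / Suc n) has_real_derivative x ^ n) (at x)"
      by (intro derivative_eq_intros) auto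
    then show "((\<lambda>s. s ^ Suc n / Suc n) has_vector_derivative x ^ n) (at x within {0..t})"
      by (simp add: has_real_derivative_iff_has_vector_derivative has_vector_derivative_at_within)
  qed
  then show ?thesis by (simp add: integral_unique)
qed

lemma picard:
  fixes G :: "'a::banach \<Rightarrow> 'a"
  assumes lip: "\<And>x y. norm (G x - G y) \<le> L * norm (x - y)" and L: "L > 0"
  shows "\<exists>x. x 0 = y \<and> (\<forall>t\<ge>0. (x has_vector_derivative G (x t)) (at t within {0..}))"
proof -
  have contG: "continuous_on UNIV G"
    by (rule lipschitz_on_continuous_on[of L]) (auto intro!: lipschitz_onI simp: dist_norm lip L less_imp_le)
  define \<phi> :: "nat \<Rightarrow> real \<Rightarrow> 'a" where "\<phi> = rec_nat (\<lambda>t. y) (\<lambda>n f t. y + integral {0..t} (\<lambda>s. G (f s)))"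
  have phi0: "\<phi> 0 = (\<lambda>t. y)" and phiS: "\<And>n. \<phi> (Suc n) = (\<lambda>t. y + integral {0..t} (\<lambda>s. G (\<phi> n s)))"
    by (simp_all add: \<phi>_def)
  have cont: "continuous_on {0..T} (\<phi> n)" for n T
  proof (induction n)
    case 0 then show ?case by (simp add: phi0)
  next
    case (Suc n)
    have c1: "continuous_on {0..T} (\<lambda>s. G (\<phi> n s))"
      by (rule continuous_on_compose2[OF contG Suc]) auto
    have "continuous (at t within {0..T}) (\<lambda>u. integral {0..u} (\<lambda>s. G (\<phi> n s)))" if "t \<in> {0..T}" for t
      by (rule has_vector_derivative_continuous, rule integral_has_vector_derivative[OF c1]) (use that in auto)
    then have "continuous_on {0..T} (\<lambda>u. integral {0..u} (\<lambda>s. G (\<phi> n s)))"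
      by (simp add: continuous_on_eq_continuous_within)
    then show ?case unfolding phiS by (intro continuous_on_add continuous_on_const)
  qed
  have intg: "(\<lambda>s. G (\<phi> n s)) integrable_on {0..t}" for n t
    by (rule integrable_continuous_interval, rule continuous_on_compose2[OF contG cont]) auto
  define C where "C T = T * norm (G y)" for T
  have bound: "\<forall>t\<in>{0..T}. norm (\<phi> (Suc n) t - \<phi> n t) \<le> C T * (L * t) ^ n / fact n" for n T
  proof (induction n)
    case 0
    show ?case unfolding phiS phi0 C_def by (auto intro!: mult_right_mono)
  next
    case (Suc n)
    show ?case
    proof
      fix t assume t: "t \<in> {0..T}"
      have "\<phi> (Suc (Suc n)) t - \<phi> (Suc n) t = integral {0..t} (\<lambda>s. G (\<phi> (Suc n) s) - G (\<phi> n s))"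
      proof -
        have e1: "\<phi> (Suc (Suc n)) t = y + integral {0..t} (\<lambda>s. G (\<phi> (Suc n) s))" by (simp only: phiS[of "Suc n"])
        have e2: "\<phi> (Suc n) t = y + integral {0..t} (\<lambda>s. G (\<phi> n s))" by (simp only: phiS[of n])
        show ?thesis by (simp only: e1 e2 integral_diff[OF intg intg]) simp
      qed
      also have "norm \<dots> \<le> integral {0..t} (\<lambda>s. L * (C T * (L * s) ^ n / fact n))"
      proof (rule integral_norm_bound_integral)
        show "(\<lambda>s. G (\<phi> (Suc n) s) - G (\<phi> n s)) integrable_on {0..t}"
          by (intro integrable_diff intg)
        show "(\<lambda>s. L * (C T * (L * s) ^ n / fact n)) integrable_on {0..t}"
          by (intro integrable_continuous_interval continuous_intros) auto
        fix s assume s: "s \<in> {0..t}"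
        then have "s \<in> {0..T}" using t by auto
        then have "norm (\<phi> (Suc n) s - \<phi> n s) \<le> C T * (L * s) ^ n / fact n" using Suc by blast
        then show "norm (G (\<phi> (Suc n) s) - G (\<phi> n s)) \<le> L * (C T * (L * s) ^ n / fact n)"
          using lip[of "\<phi> (Suc n) s" "\<phi> n s"] L by (meson mult_left_mono less_imp_le order_trans)
      qed
      also have "\<dots> = L * C T * L ^ n / fact n * integral {0..t} (\<lambda>s. s ^ n)"
        by (simp add: power_mult_distrib mult_ac)
      also have "\<dots> = C T * (L * t) ^ Suc n / fact (Suc n)"
        using t by (simp add: integral_pow_real power_mult_distrib field_simps)
      finally show "norm (\<phi> (Suc (Suc n)) t - \<phi> (Suc n) t) \<le> C T * (L * t) ^ Suc n / fact (Suc n)" .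
    qed
  qed
  define \<psi> where "\<psi> t = y + (\<Sum>k. \<phi> (Suc k) t - \<phi> k t)" for t
  have phisum: "\<phi> = (\<lambda>n t. y + (\<Sum>k<n. \<phi> (Suc k) t - \<phi> k t))"
  proof (intro ext)
    fix n t show "\<phi> n t = y + (\<Sum>k<n. \<phi> (Suc k) t - \<phi> k t)"
      using sum_lessThan_telescope[of "\<lambda>k. \<phi> k t" n] by (simp add: phi0)
  qed
  have ul: "uniform_limit {0..T} \<phi> \<psi> sequentially" if T: "T \<ge> 0" for T
  proof -
    have "uniform_limit {0..T} (\<lambda>n t. \<Sum>k<n. \<phi> (Suc k) t - \<phi> k t) (\<lambda>t. \<Sum>k. \<phi> (Suc k) t - \<phi> k t) sequentially"
    proof (rule Weierstrass_m_test)
      fix n t assume t: "t \<in> {0..T}"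
      have "norm (\<phi> (Suc n) t - \<phi> n t) \<le> C T * (L * t) ^ n / fact n" using bound t by blast
      also have "\<dots> \<le> C T * ((L * T) ^ n / fact n)"
        using t L T by (auto simp: C_def intro!: mult_left_mono divide_right_mono power_mono)
      finally show "norm (\<phi> (Suc n) t - \<phi> n t) \<le> C T * ((L * T) ^ n / fact n)" .
    next
      show "summable (\<lambda>n. C T * ((L * T) ^ n / fact n))"
        using exp_converges[of "L * T"] by (intro summable_mult) (simp add: sums_iff divide_inverse mult.commute)
    qed
    then have "uniform_limit {0..T} (\<lambda>n t. y + (\<Sum>k<n. \<phi> (Suc k) t - \<phi> k t)) (\<lambda>t. y + (\<Sum>k. \<phi> (Suc k) t - \<phi> k t)) sequentially"
      by (intro uniform_limit_intros)
    then show ?thesis by (subst phisum) (simp add: \<psi>_def[abs_def])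
  qed
  have contpsi: "continuous_on {0..T} \<psi>" if "T \<ge> 0" for T
    by (rule uniform_limit_theorem[OF _ ul[OF that]]) (auto intro: always_eventually cont)
  have inteq: "\<psi> t = y + integral {0..t} (\<lambda>s. G (\<psi> s))" if t: "t \<ge> 0" for t
  proof -
    have ul2: "uniform_limit {0..t} (\<lambda>n s. G (\<phi> n s)) (\<lambda>s. G (\<psi> s)) sequentially"
    proof (rule uniform_limitI)
      fix e :: real assume e: "e > 0"
      have "\<forall>\<^sub>F n in sequentially. \<forall>s\<in>{0..t}. dist (\<phi> n s) (\<psi> s) < e / L"
        using uniform_limitD[OF ul[OF t]] e L by simp
      then show "\<forall>\<^sub>F n in sequentially. \<forall>s\<in>{0..t}. dist (G (\<phi> n s)) (G (\<psi> s)) < e"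
      proof (rule eventually_mono)
        fix n assume H: "\<forall>s\<in>{0..t}. dist (\<phi> n s) (\<psi> s) < e / L"
        show "\<forall>s\<in>{0..t}. dist (G (\<phi> n s)) (G (\<psi> s)) < e"
        proof
          fix s assume "s \<in> {0..t}"
          then have "norm (\<phi> n s - \<psi> s) < e / L" using H by (simp add: dist_norm)
          then have "L * norm (\<phi> n s - \<psi> s) < e" using L by (simp add: field_simps)
          then show "dist (G (\<phi> n s)) (G (\<psi> s)) < e" using lip[of "\<phi> n s" "\<psi> s"] by (simp add: dist_norm)
        qed
      qed
    qed
    obtain I J where I: "\<And>n. ((\<lambda>s. G (\<phi> n s)) has_integral I n) {0..t}"
      and J: "((\<lambda>s. G (\<psi> s)) has_integral J) {0..t}" and IJ: "I \<longlonglongrightarrow> J"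
      by (rule uniform_limit_integral[OF ul2]) (auto intro: continuous_on_compose2[OF contG cont])
    have II: "(\<lambda>n. \<phi> (Suc n) t) = (\<lambda>n. y + I n)"
      using I by (auto simp: phiS intro!: ext integral_unique)
    have "(\<lambda>n. \<phi> (Suc n) t) \<longlonglongrightarrow> y + J"
      unfolding II by (rule tendsto_add[OF tendsto_const IJ])
    moreover have "(\<lambda>n. \<phi> (Suc n) t) \<longlonglongrightarrow> \<psi> t"
      using LIMSEQ_Suc[OF tendsto_uniform_limitI[OF ul[OF t], of t]] t by simp
    ultimately show ?thesis using J integral_unique LIMSEQ_unique by metis
  qed
  have "(\<psi> has_vector_derivative G (\<psi> t)) (at t within {0..})" if t: "t \<ge> 0" for t
  proof -
    have c: "continuous_on {0..t+1} (\<lambda>s. G (\<psi> s))"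
      by (rule continuous_on_compose2[OF contG contpsi]) (use t in auto)
    have "((\<lambda>u. y + integral {0..u} (\<lambda>s. G (\<psi> s))) has_vector_derivative G (\<psi> t)) (at t within {0..t+1})"
      using integral_has_vector_derivative[OF c, of t] t by (auto intro!: derivative_eq_intros)
    then have "(\<psi> has_vector_derivative G (\<psi> t)) (at t within {0..t+1})"
      by (rule has_vector_derivative_transform[rotated 2]) (use t inteq in auto)
    moreover have "at t within {0..t+1} = at t within {0..}"
      by (rule at_within_nhd[where S="{..<t+1}"]) auto
    ultimately show ?thesis by simp
  qed
  moreover have "\<psi> 0 = y" using inteq[of 0] by simp
  ultimately show ?thesis by blast
qed

lemma trap:
  fixes x :: "real \<Rightarrow> 'a::real_normed_vector"
  assumes I: "is_interval I" "0 \<in> I" "I \<subseteq> {0..}" and cont: "continuous_on I x"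
    and x0: "norm (x 0 - e) < \<rho>" and r: "r < \<rho>"
    and key: "\<And>t. t \<in> I \<Longrightarrow> (\<forall>s\<in>{0..t}. norm (x s - e) < \<rho>) \<Longrightarrow> norm (x t - e) \<le> r"
  shows "\<forall>t\<in>I. norm (x t - e) \<le> r"
proof (rule ccontr)
  assume "\<not> ?thesis"
  then obtain t1 where t1: "t1 \<in> I" "\<not> norm (x t1 - e) \<le> r" by blast
  have sub: "{0..u} \<subseteq> I" if "u \<in> I" for u
  proof
    fix s assume "s \<in> {0..u}"
    then show "s \<in> I" using I(1) I(2) that mem_is_interval_1_I[of I 0 u s] by auto
  qed
  have contx: "continuous_on {0..t1} x" using continuous_on_subset[OF cont sub[OF t1(1)]] .
  define K where "K = {s \<in> {0..t1}. \<rho> \<le> norm (x s - e)}"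
  have "\<not> (\<forall>s\<in>{0..t1}. norm (x s - e) < \<rho>)" using key[OF t1(1)] t1(2) by blast
  then have Kne: "K \<noteq> {}" unfolding K_def by (auto simp: not_less)
  have Kcl: "closed K" unfolding K_def
    by (rule continuous_on_closed_Collect_le) (auto intro!: continuous_intros contx)
  have Kbdd: "bdd_below K" unfolding K_def by (auto intro: bdd_belowI[of _ 0])
  define T where "T = Inf K"
  have TK: "T \<in> K" unfolding T_def by (rule closed_contains_Inf[OF Kne Kbdd Kcl])
  have T0: "T \<noteq> 0" using TK x0 unfolding K_def by auto
  have Tpos: "0 < T" using TK T0 unfolding K_def by auto
  have TI: "T \<in> I" using TK sub[OF t1(1)] unfolding K_def by auto
  have below: "norm (x s - e) < \<rho>" if "0 \<le> s" "s < T" for s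
  proof (rule ccontr)
    assume "\<not> ?thesis"
    then have "s \<in> K" using that TK unfolding K_def by auto
    then have "T \<le> s" unfolding T_def by (rule cInf_lower[OF _ Kbdd])
    then show False using that by simp
  qed
  define C where "C = {s \<in> {0..T}. norm (x s - e) \<le> r}"
  have contT: "continuous_on {0..T} x" using continuous_on_subset[OF cont sub[OF TI]] .
  have Ccl: "closed C" unfolding C_def
    by (rule continuous_on_closed_Collect_le) (auto intro!: continuous_intros contT)
  have "{0..<T} \<subseteq> C"
  proof
    fix s assume s: "s \<in> {0..<T}"
    have sI: "s \<in> I" using s sub[OF TI] by auto
    have "norm (x s - e) \<le> r" by (rule key[OF sI]) (use s below in auto)
    then show "s \<in> C" using s unfolding C_def by auto
  qed
  then have "closure {0..<T} \<subseteq> C" using Ccl closure_minimal by blast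
  then have "T \<in> C" using Tpos by auto
  then show False using TK r unfolding C_def K_def by auto
qed

lemma quad_lower:
  fixes q :: "'a::euclidean_space \<Rightarrow> real"
  assumes cont: "continuous_on UNIV q" and hom: "\<And>c h. q (c *\<^sub>R h) = c^2 * q h"
    and pos: "\<And>h. h \<noteq> 0 \<Longrightarrow> q h > 0"
  shows "\<exists>c>0. \<forall>h. q h \<ge> c * norm h ^ 2"
proof -
  obtain b :: 'a where b: "b \<in> Basis" using nonempty_Basis by blast
  have "b \<in> sphere 0 1" using b by simp
  then have ne: "sphere (0::'a) 1 \<noteq> {}" by blast
  obtain x0 where x0: "x0 \<in> sphere 0 1" and min: "\<And>y. y \<in> sphere 0 1 \<Longrightarrow> q x0 \<le> q y"
    using continuous_attains_inf[OF compact_sphere ne continuous_on_subset[OF cont]] by blast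
  have "x0 \<noteq> 0" using x0 by auto
  then have c: "q x0 > 0" by (rule pos)
  have "q h \<ge> q x0 * norm h ^ 2" for h
  proof (cases "h = 0")
    case True
    have "q 0 = 0" using hom[of 0 0] by simp
    then show ?thesis using True by simp
  next
    case False
    have "q (h /\<^sub>R norm h) \<ge> q x0" by (rule min) (use False in simp)
    moreover have "q h = norm h ^ 2 * q (h /\<^sub>R norm h)"
      using hom[of "norm h" "h /\<^sub>R norm h"] False by simp
    ultimately show ?thesis by (metis mult.commute mult_left_mono zero_le_power2)
  qed
  then show ?thesis using c by blast
qed

lemma exp_bound:
  fixes g g' :: "real \<Rightarrow> real"
  assumes t: "0 \<le> t" and d: "\<And>s. s \<in> {0..t} \<Longrightarrow> (g has_real_derivative g' s) (at s within {0..t})"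
    and le: "\<And>s. s \<in> {0..t} \<Longrightarrow> g' s \<le> - k * g s"
  shows "g t \<le> g 0 * exp (- k * t)"
proof -
  define h where "h s = exp (k * s) * g s" for s
  have hd: "(h has_derivative (*) (exp (k * s) * (k * g s + g' s))) (at s within {0..t})"
    if "0 \<le> s" "s \<le> t" for s
  proof -
    have "(h has_real_derivative (exp (k * s) * (k * g s + g' s))) (at s within {0..t})"
      unfolding h_def[abs_def] using d[of s] that
      by (auto intro!: derivative_eq_intros simp: algebra_simps)
    then show ?thesis by (simp add: has_field_derivative_def)
  qed
  obtain \<xi> where \<xi>: "\<xi> \<in> {0..t}" and eq: "h t - h 0 = (exp (k * \<xi>) * (k * g \<xi> + g' \<xi>)) * (t - 0)"
    using mvt_very_simple[OF t hd] by blast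
  have "k * g \<xi> + g' \<xi> \<le> 0" using le[OF \<xi>] by simp
  then have neg: "exp (k * \<xi>) * (k * g \<xi> + g' \<xi>) \<le> 0" by (metis exp_ge_zero mult_nonneg_nonpos)
  have "(exp (k * \<xi>) * (k * g \<xi> + g' \<xi>)) * (t - 0) \<le> 0"
    using mult_nonpos_nonneg[OF neg, of "t - 0"] t by linarith
  then have "h t \<le> h 0" using eq by simp
  then have "exp (k * t) * g t \<le> g 0" by (simp add: h_def)
  then have A: "exp (- k * t) * (exp (k * t) * g t) \<le> exp (- k * t) * g 0" by (rule mult_left_mono) simp
  have e1: "exp (- k * t) * exp (k * t) = 1" by (simp add: exp_add[symmetric])
  have "exp (- k * t) * (exp (k * t) * g t) = g t" by (simp only: mult.assoc[symmetric] e1 mult_1_left)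
  then show ?thesis using A by (simp only: mult.commute[of "g 0"])
qed

lemma chain_V:
  fixes x :: "real \<Rightarrow> 'a::real_normed_vector"
  assumes xd: "(x has_vector_derivative v) (at t within I)"
    and Vd: "(V has_derivative DV) (at (x t))"
  shows "((\<lambda>s. V (x s)) has_real_derivative DV v) (at t within I)"
proof -
  have bl: "bounded_linear DV" using Vd by (rule has_derivative_bounded_linear)
  have "((V \<circ> x) has_derivative (DV \<circ> (\<lambda>h. h *\<^sub>R v))) (at t within I)"
    by (rule diff_chain_within[OF xd[unfolded has_vector_derivative_def] has_derivative_at_withinI[OF Vd]])
  moreover have "(DV \<circ> (\<lambda>h. h *\<^sub>R v)) = (*) (DV v)"
    using linear.scaleR[OF bounded_linear.linear[OF bl]] by (auto simp: fun_eq_iff)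
  ultimately show ?thesis by (simp add: has_field_derivative_def comp_def)
qed

lemma interval_sub:
  fixes I :: "real set"
  assumes "is_interval I" "0 \<in> I" "t \<in> I"
  shows "{0..t} \<subseteq> I"
proof
  fix s assume "s \<in> {0..t}"
  then show "s \<in> I" using assms mem_is_interval_1_I[of I 0 t s] by auto
qed

lemma sol_cont:
  assumes "\<forall>t\<in>I. (x has_vector_derivative F (x t)) (at t within I)"
  shows "continuous_on I x"
  using assms by (auto simp: continuous_on_eq_continuous_within intro: has_vector_derivative_continuous)

lemma exp_to_0:
  assumes "k > (0::real)"
  shows "((\<lambda>t. exp (- k * t)) \<longlongrightarrow> 0) at_top"
proof -
  have "filterlim (\<lambda>t. k * t) at_top at_top"
    by (rule filterlim_tendsto_pos_mult_at_top[OF tendsto_const assms filterlim_ident])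
  then have "filterlim (\<lambda>t. - (k * t)) at_bot at_top" by (simp add: filterlim_uminus_at_top)
  then show ?thesis using filterlim_compose[OF exp_at_bot] by simp
qed

theorem lyap_abstract:
  fixes F G :: "'a::banach \<Rightarrow> 'a" and V :: "'a \<Rightarrow> real" and DV :: "'a \<Rightarrow> 'a \<Rightarrow> real"
  assumes Fe: "F e = 0" and Vd: "\<And>x. (V has_derivative DV x) (at x)"
    and pos: "\<rho> > 0" "ca > 0" "cb > 0" "\<kappa> > 0"
    and low: "\<And>x. ca * (norm (x - e))^2 \<le> V x" and up: "\<And>x. V x \<le> cb * (norm (x - e))^2"
    and dec: "\<And>x. norm (x - e) < \<rho> \<Longrightarrow> DV x (F x) \<le> - \<kappa> * V x"
    and Glip: "\<And>x y. norm (G x - G y) \<le> L * norm (x - y)" "L > 0"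
    and GF: "\<And>x. norm (x - e) < \<rho> \<Longrightarrow> G x = F x"
  shows "loc_asym_stable_in S F e"
proof -
  have seg: "V (x t) \<le> V (x 0) * exp (-\<kappa> * t)"
    if t: "0 \<le> t" and xd: "\<And>s. s \<in> {0..t} \<Longrightarrow> (x has_vector_derivative F (x s)) (at s within {0..t})"
      and xin: "\<And>s. s \<in> {0..t} \<Longrightarrow> norm (x s - e) < \<rho>" for x t
  proof (rule exp_bound[OF t, where g'="\<lambda>s. DV (x s) (F (x s))"])
    fix s assume s: "s \<in> {0..t}"
    show "((\<lambda>s. V (x s)) has_real_derivative DV (x s) (F (x s))) (at s within {0..t})"
      by (rule chain_V[OF xd[OF s] Vd])
    show "DV (x s) (F (x s)) \<le> - \<kappa> * V (x s)" by (rule dec[OF xin[OF s]])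
  qed
  define dd where "dd r = r * min 1 (ca / cb)" for r
  have ddpos: "dd r > 0" if "r > 0" for r using that pos by (simp add: dd_def)
  have dd_le: "dd r \<le> r" if "r > 0" for r using that by (simp add: dd_def)
  have Vsmall: "V y < ca * r^2" if "norm (y - e) < dd r" "r > 0" for y r
  proof -
    have m: "min 1 (ca/cb) \<le> 1" "min 1 (ca/cb) \<le> ca / cb" "min 1 (ca/cb) > 0" using pos by auto
    have n2: "(norm (y - e))^2 < (dd r)^2" by (rule power_strict_mono) (use that in auto)
    have "V y \<le> cb * (norm (y - e))^2" by (rule up)
    also have "\<dots> < cb * (dd r)^2" by (rule mult_strict_left_mono[OF n2 pos(3)])
    also have "\<dots> = cb * r^2 * (min 1 (ca/cb) * min 1 (ca/cb))" by (simp add: dd_def power2_eq_square)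
    also have "\<dots> \<le> cb * r^2 * (ca / cb * 1)"
    proof (rule mult_left_mono)
      show "min 1 (ca/cb) * min 1 (ca/cb) \<le> ca / cb * 1"
        by (rule mult_mono[OF m(2) m(1)]) (use m(3) pos in auto)
      show "0 \<le> cb * r^2" using pos by simp
    qed
    also have "\<dots> = ca * r^2" using pos by simp
    finally show ?thesis .
  qed
  have trapped: "\<forall>t\<in>I. norm (x t - e) \<le> r \<and> V (x t) \<le> V (x 0) * exp (-\<kappa> * t)"
    if sol: "is_sol F x I" and x0: "norm (x 0 - e) < dd r" and r: "0 < r" "r < \<rho>" for x I r
  proof -
    from sol have I: "is_interval I" "0 \<in> I" "I \<subseteq> {0..}"
      and xd: "\<forall>t\<in>I. (x has_vector_derivative F (x t)) (at t within I)" by (auto simp: is_sol_def)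
    have cont: "continuous_on I x" by (rule sol_cont[OF xd])
    have xdt: "(x has_vector_derivative F (x s)) (at s within {0..t})" if "t \<in> I" "s \<in> {0..t}" for s t
    proof -
      have sub: "{0..t} \<subseteq> I" by (rule interval_sub[OF I(1,2) that(1)])
      have sI: "s \<in> I" using sub that(2) by blast
      show ?thesis by (rule has_vector_derivative_within_subset[OF bspec[OF xd sI] sub])
    qed
    have all: "\<forall>t\<in>I. norm (x t - e) \<le> r"
    proof (rule trap[OF I cont _ r(2)])
      show "norm (x 0 - e) < \<rho>" using x0 dd_le[OF r(1)] r by simp
      fix t assume tI: "t \<in> I" and H: "\<forall>s\<in>{0..t}. norm (x s - e) < \<rho>"
      have t0: "0 \<le> t" using tI I by auto
      have "V (x t) \<le> V (x 0) * exp (-\<kappa> * t)" by (rule seg[OF t0 xdt[OF tI]]) (use H in auto)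
      also have "\<dots> \<le> V (x 0)"
      proof (rule mult_left_le)
        show "exp (- \<kappa> * t) \<le> 1" using pos t0 by simp
        have "0 \<le> ca * (norm (x 0 - e))^2" using pos by simp
        then show "0 \<le> V (x 0)" using low[of "x 0"] by linarith
      qed
      also have "\<dots> < ca * r^2" by (rule Vsmall[OF x0 r(1)])
      finally have "ca * (norm (x t - e))^2 < ca * r^2" using low[of "x t"] by linarith
      then have "(norm (x t - e))^2 < r^2" using pos by simp
      then have "norm (x t - e) < r" by (rule power_less_imp_less_base) (use r in simp)
      then show "norm (x t - e) \<le> r" by simp
    qed
    show ?thesis
    proof
      fix t assume tI: "t \<in> I"
      have t0: "0 \<le> t" using tI I by auto
      have "V (x t) \<le> V (x 0) * exp (-\<kappa> * t)"
      proof (rule seg[OF t0 xdt[OF tI]])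
        fix s assume "s \<in> {0..t}"
        then have "s \<in> I" using interval_sub[OF I(1,2) tI] by auto
        then show "norm (x s - e) < \<rho>" using all r by force
      qed
      then show "norm (x t - e) \<le> r \<and> V (x t) \<le> V (x 0) * exp (-\<kappa> * t)" using all tI by blast
    qed
  qed
  have stable: "stable_in S F e"
    unfolding stable_in_def
  proof (intro allI impI)
    fix \<epsilon> :: real assume \<epsilon>: "\<epsilon> > 0"
    define r where "r = min (\<rho>/2) (\<epsilon>/2)"
    have r: "0 < r" "r < \<rho>" "r < \<epsilon>" using \<epsilon> pos by (auto simp: r_def)
    show "\<exists>d>0. \<forall>x I. is_sol F x I \<and> x 0 \<in> S \<and> dist (x 0) e < d \<longrightarrow> (\<forall>t\<in>I. dist (x t) e < \<epsilon>)"
    proof (intro exI[of _ "dd r"] conjI allI impI ballI)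
      show "dd r > 0" by (rule ddpos[OF r(1)])
      fix x I t assume H: "is_sol F x I \<and> x 0 \<in> S \<and> dist (x 0) e < dd r" and t: "t \<in> I"
      have A: "norm (x 0 - e) < dd r" using H by (simp add: dist_norm)
      have "norm (x t - e) \<le> r" using trapped[of x I r, OF conjunct1[OF H] A r(1) r(2)] t by blast
      then show "dist (x t) e < \<epsilon>" using r by (simp add: dist_norm)
    qed
  qed
  have attractive: "attractive_in S F e"
    unfolding attractive_in_def
  proof (intro exI[of _ "dd (\<rho>/2)"] conjI ballI impI)
    show "dd (\<rho>/2) > 0" using ddpos pos by simp
    fix y assume yS: "y \<in> S" and yd: "dist y e < dd (\<rho>/2)"
    have r: "0 < \<rho>/2" "\<rho>/2 < \<rho>" using pos by auto
    obtain x where x0: "x 0 = y" and xG: "\<forall>t\<ge>0. (x has_vector_derivative G (x t)) (at t within {0..})"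
      using picard[OF Glip] by blast
    have contx: "continuous_on {0..} x"
      by (rule sol_cont[where F=G]) (use xG in auto)
    have allin: "\<forall>t\<in>{0..}. norm (x t - e) \<le> \<rho>/2"
    proof (rule trap[OF _ _ _ contx _ r(2)])
      show "norm (x 0 - e) < \<rho>" using yd x0 dd_le[OF r(1)] pos(1) by (simp add: dist_norm)
      fix t assume t: "t \<in> {0..}" and H: "\<forall>s\<in>{0..t}. norm (x s - e) < \<rho>"
      have "is_sol F x {0..t}"
        unfolding is_sol_def
      proof (intro conjI ballI)
        fix s assume s: "s \<in> {0..t}"
        have "(x has_vector_derivative G (x s)) (at s within {0..t})"
          using xG s by (auto intro: has_vector_derivative_within_subset)
        then show "(x has_vector_derivative F (x s)) (at s within {0..t})" using GF H s by simp
      qed (use t in auto)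
      moreover have "norm (x 0 - e) < dd (\<rho>/2)" using yd x0 by (simp add: dist_norm)
      ultimately have "\<forall>s\<in>{0..t}. norm (x s - e) \<le> \<rho>/2 \<and> V (x s) \<le> V (x 0) * exp (-\<kappa> * s)" by (rule trapped[OF _ _ r(1) r(2)])
      then show "norm (x t - e) \<le> \<rho>/2" using t by auto
    qed (auto simp: is_interval_ci)
    have "is_sol F x {0..}"
      unfolding is_sol_def
    proof (intro conjI ballI)
      fix t :: real assume "t \<in> {0..}"
      then show "(x has_vector_derivative F (x t)) (at t within {0..})"
      proof -
        have "norm (x t - e) < \<rho>" using allin \<open>t \<in> {0..}\<close> r by force
        then show ?thesis using xG GF[of "x t"] \<open>t \<in> {0..}\<close> by auto
      qed
    qed (auto simp: is_interval_ci)
    then show "\<exists>x. is_sol F x {0..} \<and> x 0 = y" using x0 by blast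
  next
    fix y assume yS: "y \<in> S" and yd: "dist y e < dd (\<rho>/2)"
    have r: "0 < \<rho>/2" "\<rho>/2 < \<rho>" using pos by auto
    show "\<forall>x. is_sol F x {0..} \<and> x 0 = y \<longrightarrow> (x \<longlongrightarrow> e) at_top"
    proof (intro allI impI)
      fix x assume H: "is_sol F x {0..} \<and> x 0 = y"
      have bnd: "norm (x t - e) \<le> sqrt (V y / ca * exp (-\<kappa> * t))" if "t \<ge> 0" for t
      proof -
        have A: "norm (x 0 - e) < dd (\<rho>/2)" using yd H by (simp add: dist_norm)
        have "V (x t) \<le> V (x 0) * exp (-\<kappa> * t)"
          using trapped[of x "{0..}" "\<rho>/2", OF conjunct1[OF H] A r(1) r(2)] that by auto
        then have "ca * (norm (x t - e))^2 \<le> V y * exp (-\<kappa> * t)" using low[of "x t"] H by auto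
        then have "(norm (x t - e))^2 \<le> V y / ca * exp (-\<kappa> * t)" using pos by (simp add: field_simps)
        then show ?thesis by (rule real_le_rsqrt)
      qed
      have "((\<lambda>t. sqrt (V y / ca * exp (-\<kappa> * t))) \<longlongrightarrow> sqrt (V y / ca * 0)) at_top"
        by (intro tendsto_real_sqrt tendsto_mult tendsto_const exp_to_0 pos)
      then have lim0: "((\<lambda>t. sqrt (V y / ca * exp (-\<kappa> * t))) \<longlongrightarrow> 0) at_top" by simp
      have "((\<lambda>t. x t - e) \<longlongrightarrow> 0) at_top"
      proof (rule Lim_null_comparison[OF _ lim0])
        show "\<forall>\<^sub>F t in at_top. norm (x t - e) \<le> sqrt (V y / ca * exp (- \<kappa> * t))"
          using bnd by (auto simp: eventually_at_top_linorder)
      qed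
      then show "(x \<longlongrightarrow> e) at_top" by (simp add: LIM_zero_iff)
    qed
  qed
  show ?thesis unfolding loc_asym_stable_in_def equilibrium_def
    using Fe stable attractive by blast
qed

lemma clamp_G:
  fixes F :: "'a::euclidean_space \<Rightarrow> 'a"
  assumes R: "R > 0" and lip: "\<And>x y. x \<in> cball e R \<Longrightarrow> y \<in> cball e R \<Longrightarrow> norm (F x - F y) \<le> L * norm (x - y)"
    and L: "L > 0"
  shows "\<exists>G. (\<forall>x y. norm (G x - G y) \<le> L * norm (x - y)) \<and> (\<forall>x. norm (x - e) < R \<longrightarrow> G x = F x)"
proof -
  define P where "P = closest_point (cball e R)"
  have cl: "closed (cball e R)" "convex (cball e R)" "cball e R \<noteq> {}" using R by auto
  have Pin: "P x \<in> cball e R" for x unfolding P_def by (rule closest_point_in_set[OF cl(1,3)])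
  have Plip: "norm (P x - P y) \<le> norm (x - y)" for x y
    using closest_point_lipschitz[OF cl(2,1,3), of x y] by (simp add: P_def dist_norm)
  have G1: "norm (F (P x) - F (P y)) \<le> L * norm (x - y)" for x y
    using lip[OF Pin Pin, of x y] Plip[of x y] L by (meson mult_left_mono less_imp_le order_trans)
  have G2: "F (P x) = F x" if "norm (x - e) < R" for x
  proof -
    have "x \<in> cball e R" using that by (simp add: dist_norm norm_minus_commute)
    then show ?thesis by (simp add: P_def closest_point_self)
  qed
  show ?thesis by (rule exI[of _ "\<lambda>x. F (P x)"]) (use G1 G2 in auto)
qed

definition Vq :: "real \<Rightarrow> real \<Rightarrow> real \<Rightarrow> 'a \<Rightarrow> 'a \<Rightarrow> 'a \<Rightarrow> 'a::real_inner \<Rightarrow> real" where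
  "Vq w1 w2 w3 L1 L2 L3 h = w1 * (inner L1 h)^2 + w2 * (inner L2 h)^2 + w3 * (inner L3 h)^2"

definition Dq :: "real \<Rightarrow> real \<Rightarrow> real \<Rightarrow> 'a \<Rightarrow> 'a \<Rightarrow> 'a \<Rightarrow> 'a::real_inner \<Rightarrow> 'a \<Rightarrow> real" where
  "Dq w1 w2 w3 L1 L2 L3 h k = 2 * (w1 * inner L1 h * inner L1 k + w2 * inner L2 h * inner L2 k + w3 * inner L3 h * inner L3 k)"

definition Cq :: "real \<Rightarrow> real \<Rightarrow> real \<Rightarrow> 'a \<Rightarrow> 'a \<Rightarrow> 'a::real_inner \<Rightarrow> real" where
  "Cq w1 w2 w3 L1 L2 L3 = \<bar>w1\<bar> * (norm L1)^2 + \<bar>w2\<bar> * (norm L2)^2 + \<bar>w3\<bar> * (norm L3)^2"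

lemma Cq_nonneg: "Cq w1 w2 w3 L1 L2 L3 \<ge> 0"
  by (simp add: Cq_def)

lemma Vq_hom: "Vq w1 w2 w3 L1 L2 L3 (c *\<^sub>R h) = c^2 * Vq w1 w2 w3 L1 L2 L3 h"
  by (simp add: Vq_def power_mult_distrib algebra_simps)

lemma Vq_cont: "continuous_on UNIV (Vq w1 w2 w3 L1 L2 L3)"
  unfolding Vq_def[abs_def] by (intro continuous_intros)

lemma inner_sq_le: "(inner L h)^2 \<le> (norm L)^2 * (norm h)^2"
proof -
  have "\<bar>inner L h\<bar> \<le> norm L * norm h" by (rule Cauchy_Schwarz_ineq2)
  then have "\<bar>inner L h\<bar>^2 \<le> (norm L * norm h)^2" by (rule power_mono) simp
  then show ?thesis by (simp add: power_mult_distrib)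
qed

lemma wsq_le: "w * (inner L h)^2 \<le> \<bar>w\<bar> * (norm L)^2 * (norm h)^2"
proof -
  have "w * (inner L h)^2 \<le> \<bar>w\<bar> * (inner L h)^2" by (simp add: mult_right_mono)
  also have "\<dots> \<le> \<bar>w\<bar> * ((norm L)^2 * (norm h)^2)" by (rule mult_left_mono[OF inner_sq_le]) simp
  finally show ?thesis by (simp add: mult.assoc)
qed

lemma Vq_up: "Vq w1 w2 w3 L1 L2 L3 h \<le> Cq w1 w2 w3 L1 L2 L3 * (norm h)^2"
  using wsq_le[of w1 L1 h] wsq_le[of w2 L2 h] wsq_le[of w3 L3 h]
  by (simp add: Vq_def Cq_def algebra_simps)

lemma Vq_low: "- Cq w1 w2 w3 L1 L2 L3 * (norm h)^2 \<le> Vq w1 w2 w3 L1 L2 L3 h"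
  using wsq_le[of "-w1" L1 h] wsq_le[of "-w2" L2 h] wsq_le[of "-w3" L3 h]
  by (simp add: Vq_def Cq_def algebra_simps)

lemma wprod_le: "\<bar>w * inner L h * inner L k\<bar> \<le> \<bar>w\<bar> * (norm L)^2 * (norm h * norm k)"
proof -
  have "\<bar>w * inner L h * inner L k\<bar> = \<bar>w\<bar> * (\<bar>inner L h\<bar> * \<bar>inner L k\<bar>)" by (simp add: abs_mult)
  also have "\<dots> \<le> \<bar>w\<bar> * ((norm L * norm h) * (norm L * norm k))"
    by (intro mult_left_mono mult_mono Cauchy_Schwarz_ineq2) auto
  finally show ?thesis by (simp add: power2_eq_square mult_ac)
qed

lemma Dq_bound: "\<bar>Dq w1 w2 w3 L1 L2 L3 h k\<bar> \<le> 2 * Cq w1 w2 w3 L1 L2 L3 * (norm h * norm k)"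
proof -
  have "\<bar>Dq w1 w2 w3 L1 L2 L3 h k\<bar> \<le> 2 * (\<bar>w1 * inner L1 h * inner L1 k\<bar> + \<bar>w2 * inner L2 h * inner L2 k\<bar> + \<bar>w3 * inner L3 h * inner L3 k\<bar>)"
    unfolding Dq_def by (simp add: abs_mult[of 2])
  also have "\<dots> \<le> 2 * Cq w1 w2 w3 L1 L2 L3 * (norm h * norm k)"
    using wprod_le[of w1 L1 h k] wprod_le[of w2 L2 h k] wprod_le[of w3 L3 h k]
    by (simp add: Cq_def algebra_simps)
  finally show ?thesis .
qed

lemma Dq_add: "Dq w1 w2 w3 L1 L2 L3 h (a + b) = Dq w1 w2 w3 L1 L2 L3 h a + Dq w1 w2 w3 L1 L2 L3 h b"
  by (simp add: Dq_def inner_add_right algebra_simps)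

lemma Vq_deriv: "((\<lambda>x. Vq w1 w2 w3 L1 L2 L3 (x - e)) has_derivative Dq w1 w2 w3 L1 L2 L3 (x - e)) (at x)"
  unfolding Vq_def Dq_def[abs_def]
  by (auto intro!: derivative_eq_intros ext simp: algebra_simps)

lemma DqJ_hom:
  assumes "bounded_linear J"
  shows "Dq w1 w2 w3 L1 L2 L3 (c *\<^sub>R h) (J (c *\<^sub>R h)) = c^2 * Dq w1 w2 w3 L1 L2 L3 h (J h)"
  using linear.scaleR[OF bounded_linear.linear[OF assms]]
  by (simp add: Dq_def power2_eq_square algebra_simps)

lemma DqJ_cont:
  assumes "bounded_linear J"
  shows "continuous_on UNIV (\<lambda>h. Dq w1 w2 w3 L1 L2 L3 h (J h))"
  unfolding Dq_def using assms
  by (intro continuous_intros) (auto intro: linear_continuous_on)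

theorem chetaev_abstract:
  fixes F G :: "'a::banach \<Rightarrow> 'a" and W :: "'a \<Rightarrow> real" and DW :: "'a \<Rightarrow> 'a \<Rightarrow> real"
  assumes Wd: "\<And>x. (W has_derivative DW x) (at x)"
    and pos: "\<rho> > 0" "cb > 0" "\<kappa> > 0"
    and up: "\<And>x. W x \<le> cb * (norm (x - e))^2"
    and inc: "\<And>x. norm (x - e) < \<rho> \<Longrightarrow> DW x (F x) \<ge> \<kappa> * (norm (x - e))^2"
    and Glip: "\<And>x y. norm (G x - G y) \<le> L * norm (x - y)" "L > 0"
    and GF: "\<And>x. norm (x - e) < \<rho> \<Longrightarrow> G x = F x"
    and start: "\<And>d. d > 0 \<Longrightarrow> \<exists>y\<in>S. norm (y - e) < d \<and> W y > 0"
  shows "\<not> stable_in S F e"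
proof
  assume st: "stable_in S F e"
  obtain d where d: "d > 0" and dH: "\<And>x I. is_sol F x I \<and> x 0 \<in> S \<and> dist (x 0) e < d \<Longrightarrow> \<forall>t\<in>I. dist (x t) e < \<rho>/2"
    using st pos unfolding stable_in_def by (metis half_gt_zero)
  obtain y where yS: "y \<in> S" and yd: "norm (y - e) < min d (\<rho>/2)" and Wy: "W y > 0"
    using start[of "min d (\<rho>/2)"] d pos by auto
  obtain x where x0: "x 0 = y" and xG: "\<forall>t\<ge>0. (x has_vector_derivative G (x t)) (at t within {0..})"
    using picard[OF Glip] by blast
  have contx: "continuous_on {0..} x"
    by (rule sol_cont[where F=G]) (use xG in auto)
  define I where "I = {t. 0 \<le> t \<and> (\<forall>s\<in>{0..t}. norm (x s - e) < \<rho>)}"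
  have Iint: "is_interval I" unfolding is_interval_1 I_def by auto
  have I0: "0 \<in> I" unfolding I_def using yd x0 pos(1) by auto
  have solI: "is_sol F x I"
    unfolding is_sol_def
  proof (intro conjI ballI Iint I0)
    show "I \<subseteq> {0..}" unfolding I_def by auto
    fix t assume tI: "t \<in> I"
    then have t0: "t \<ge> 0" and nt: "norm (x t - e) < \<rho>" unfolding I_def by auto
    have "(x has_vector_derivative G (x t)) (at t within I)"
      by (rule has_vector_derivative_within_subset[OF xG[rule_format, OF t0]]) (auto simp: I_def)
    then show "(x has_vector_derivative F (x t)) (at t within I)" using GF[OF nt] by simp
  qed
  have inI: "\<forall>t\<in>I. dist (x t) e < \<rho>/2" by (rule dH) (use solI yS x0 yd in \<open>auto simp: dist_norm\<close>)
  have allin: "\<forall>t\<in>{0..}. norm (x t - e) \<le> \<rho>/2"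
  proof (rule trap[OF _ _ _ contx])
    show "norm (x 0 - e) < \<rho>" using yd x0 pos(1) by simp
    show "\<rho>/2 < \<rho>" using pos by simp
    fix t assume t: "t \<in> {0..}" and H: "\<forall>s\<in>{0..t}. norm (x s - e) < \<rho>"
    then have "t \<in> I" unfolding I_def by auto
    then show "norm (x t - e) \<le> \<rho>/2" using inI by (force simp: dist_norm)
  qed (auto simp: is_interval_ci)
  define k where "k = - (\<kappa> / cb)"
  have grow: "- W (x t) \<le> - W (x 0) * exp (- k * t)" if t: "t \<ge> 0" for t
  proof (rule exp_bound[OF t, where g'="\<lambda>s. - DW (x s) (F (x s))"])
    fix s assume s: "s \<in> {0..t}"
    have ns: "norm (x s - e) < \<rho>" using allin s pos by force
    have "(x has_vector_derivative G (x s)) (at s within {0..t})"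
      by (rule has_vector_derivative_within_subset[OF xG[rule_format]]) (use s in auto)
    then have "(x has_vector_derivative F (x s)) (at s within {0..t})" using GF[OF ns] by simp
    then have "((\<lambda>s. W (x s)) has_real_derivative DW (x s) (F (x s))) (at s within {0..t})"
      by (rule chain_V[OF _ Wd])
    then show "((\<lambda>s. - W (x s)) has_real_derivative - DW (x s) (F (x s))) (at s within {0..t})"
      by (rule DERIV_minus)
    have "W (x s) / cb \<le> (norm (x s - e))^2" using up[of "x s"] pos by (simp add: field_simps)
    then have "\<kappa> * (W (x s) / cb) \<le> \<kappa> * (norm (x s - e))^2" using pos by (metis mult_left_mono less_imp_le)
    also have "\<dots> \<le> DW (x s) (F (x s))" by (rule inc[OF ns])
    finally show "- DW (x s) (F (x s)) \<le> - k * - W (x s)" by (simp add: k_def)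
  qed
  define B where "B = cb * (\<rho>/2)^2"
  have Bpos: "B > 0" using pos by (simp add: B_def)
  define t where "t = B / W y / (\<kappa> / cb)"
  have t0: "t \<ge> 0" using Bpos Wy pos by (simp add: t_def)
  have "W y * exp (\<kappa> / cb * t) \<le> W (x t)" using grow[OF t0] x0 by (simp add: k_def)
  also have "\<dots> \<le> cb * (norm (x t - e))^2" by (rule up)
  also have "\<dots> \<le> B" unfolding B_def using allin t0 pos
    by (intro mult_left_mono power_mono) auto
  finally have A: "W y * exp (\<kappa> / cb * t) \<le> B" .
  have "W y * (1 + \<kappa> / cb * t) \<le> W y * exp (\<kappa> / cb * t)"
    using Wy by (intro mult_left_mono exp_ge_add_one_self) auto
  also have "W y * (1 + \<kappa> / cb * t) = W y + B" using Wy pos by (simp add: t_def field_simps)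
  finally show False using A Wy by simp
qed

theorem quad_stable:
  fixes F :: "'a::euclidean_space \<Rightarrow> 'a"
  assumes Fe: "F e = 0" and FJ: "(F has_derivative J) (at e)"
    and Vpos: "\<And>h. h \<noteq> 0 \<Longrightarrow> Vq wa wb wc La Lb Lc h > 0"
    and Vneg: "\<And>h. h \<noteq> 0 \<Longrightarrow> Dq wa wb wc La Lb Lc h (J h) < 0"
    and R: "R > 0" and lip: "\<And>x y. x \<in> cball e R \<Longrightarrow> y \<in> cball e R \<Longrightarrow> norm (F x - F y) \<le> L * norm (x - y)"
    and L: "L > 0"
  shows "loc_asym_stable_in S F e"
proof -
  let ?V = "Vq wa wb wc La Lb Lc" and ?D = "Dq wa wb wc La Lb Lc" and ?C = "Cq wa wb wc La Lb Lc"
  have bl: "bounded_linear J" using FJ by (rule has_derivative_bounded_linear)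
  obtain c1 where c1: "c1 > 0" "\<And>h. ?V h \<ge> c1 * (norm h)^2"
    using quad_lower[OF Vq_cont Vq_hom Vpos] by blast
  obtain c3 where c3: "c3 > 0" "\<And>h. - ?D h (J h) \<ge> c3 * (norm h)^2"
  proof -
    have "\<exists>c>0. \<forall>h. - ?D h (J h) \<ge> c * (norm h)^2"
      by (rule quad_lower) (auto intro!: continuous_intros DqJ_cont[OF bl] simp: DqJ_hom[OF bl] Vneg)
    then show ?thesis using that by blast
  qed
  define C' where "C' = 2 * ?C + 1"
  have C': "C' > 0" "?C \<le> C'" using Cq_nonneg[of wa wb wc La Lb Lc] by (auto simp: C'_def)
  define \<epsilon> where "\<epsilon> = c3 / (2 * C')"
  have \<epsilon>: "\<epsilon> > 0" using c3 C' by (simp add: \<epsilon>_def)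
  obtain \<delta> where \<delta>: "\<delta> > 0" and \<delta>H: "\<And>y. norm (y - e) < \<delta> \<Longrightarrow> norm (F y - F e - J (y - e)) \<le> \<epsilon> * norm (y - e)"
    using FJ \<epsilon> unfolding has_derivative_at_alt by meson
  define \<rho> where "\<rho> = min \<delta> R"
  have \<rho>: "\<rho> > 0" "\<rho> \<le> R" "\<rho> \<le> \<delta>" using \<delta> R by (auto simp: \<rho>_def)
  obtain G where Glip: "\<And>x y. norm (G x - G y) \<le> L * norm (x - y)" and GF0: "\<And>x. norm (x - e) < R \<Longrightarrow> G x = F x"
    using clamp_G[OF R lip L] by blast
  show ?thesis
  proof (rule lyap_abstract[where V="\<lambda>x. ?V (x - e)" and DV="\<lambda>x. ?D (x - e)" and \<rho>=\<rho> and ca=c1 and cb=C'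
        and \<kappa>="c3 / (2 * C')" and G=G and L=L])
    show "F e = 0" by (rule Fe)
    show "\<And>x. ((\<lambda>x. ?V (x - e)) has_derivative ?D (x - e)) (at x)" by (rule Vq_deriv)
    show "\<rho> > 0" "c1 > 0" "C' > 0" "c3 / (2 * C') > 0" using \<rho> c1 C' c3 by auto
    show "\<And>x. c1 * (norm (x - e))^2 \<le> ?V (x - e)" using c1 by blast
    show "?V (x - e) \<le> C' * (norm (x - e))^2" for x
      using Vq_up[of wa wb wc La Lb Lc "x - e"] C'(2) mult_right_mono[OF C'(2), of "(norm (x - e))^2"] by simp
    show "\<And>x y. norm (G x - G y) \<le> L * norm (x - y)" by (rule Glip)
    show "L > 0" by (rule L)
    show "\<And>x. norm (x - e) < \<rho> \<Longrightarrow> G x = F x" using GF0 \<rho> by force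
    fix x assume nx: "norm (x - e) < \<rho>"
    define h where "h = x - e"
    define r where "r = F x - J h"
    have nr: "norm r \<le> \<epsilon> * norm h" using \<delta>H[of x] nx \<rho> Fe by (simp add: r_def h_def)
    have Fx: "F x = J h + r" by (simp add: r_def)
    have "?D h r \<le> \<bar>?D h r\<bar>" by simp
    also have "\<dots> \<le> 2 * ?C * (norm h * norm r)" by (rule Dq_bound)
    also have "\<dots> \<le> C' * (norm h * (\<epsilon> * norm h))"
      using C' nr by (intro mult_mono) (auto simp: C'_def)
    also have "\<dots> = c3 / 2 * (norm h)^2" using C' by (simp add: \<epsilon>_def power2_eq_square)
    finally have D2: "?D h r \<le> c3 / 2 * (norm h)^2" .
    have D1: "?D h (J h) \<le> - c3 * (norm h)^2" using c3(2)[of h] by simp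
    have Vup: "?V h \<le> C' * (norm h)^2"
      using Vq_up[of wa wb wc La Lb Lc h] C'(2) mult_right_mono[OF C'(2), of "(norm h)^2"] by simp
    have "?D h (F x) = ?D h (J h) + ?D h r" by (simp add: Fx Dq_add)
    also have "\<dots> \<le> - (c3 / 2) * (norm h)^2" using D1 D2 by simp
    also have "\<dots> \<le> - (c3 / (2 * C')) * ?V h"
    proof -
      have "c3 / (2 * C') * ?V h \<le> c3 / (2 * C') * (C' * (norm h)^2)"
        using Vup c3 C' by (intro mult_left_mono) auto
      also have "\<dots> = c3 / 2 * (norm h)^2" using C' by simp
      finally show ?thesis by simp
    qed
    finally show "?D (x - e) (F x) \<le> - (c3 / (2 * C')) * ?V (x - e)" by (simp add: h_def)
  qed
qed

theorem quad_unstable: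
  fixes F :: "'a::euclidean_space \<Rightarrow> 'a"
  assumes Fe: "F e = 0" and FJ: "(F has_derivative J) (at e)"
    and Wpos: "\<And>h. h \<noteq> 0 \<Longrightarrow> Dq wa wb wc La Lb Lc h (J h) > 0"
    and R: "R > 0" and lip: "\<And>x y. x \<in> cball e R \<Longrightarrow> y \<in> cball e R \<Longrightarrow> norm (F x - F y) \<le> L * norm (x - y)"
    and L: "L > 0"
    and start: "\<And>d. d > 0 \<Longrightarrow> \<exists>y\<in>S. norm (y - e) < d \<and> Vq wa wb wc La Lb Lc (y - e) > 0"
  shows "\<not> stable_in S F e"
proof -
  let ?V = "Vq wa wb wc La Lb Lc" and ?D = "Dq wa wb wc La Lb Lc" and ?C = "Cq wa wb wc La Lb Lc"
  have bl: "bounded_linear J" using FJ by (rule has_derivative_bounded_linear)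
  obtain c3 where c3: "c3 > 0" "\<And>h. ?D h (J h) \<ge> c3 * (norm h)^2"
  proof -
    have "\<exists>c>0. \<forall>h. ?D h (J h) \<ge> c * (norm h)^2"
      by (rule quad_lower) (auto intro!: continuous_intros DqJ_cont[OF bl] simp: DqJ_hom[OF bl] Wpos)
    then show ?thesis using that by blast
  qed
  define C' where "C' = 2 * ?C + 1"
  have C': "C' > 0" "?C \<le> C'" using Cq_nonneg[of wa wb wc La Lb Lc] by (auto simp: C'_def)
  define \<epsilon> where "\<epsilon> = c3 / (2 * C')"
  have \<epsilon>: "\<epsilon> > 0" using c3 C' by (simp add: \<epsilon>_def)
  obtain \<delta> where \<delta>: "\<delta> > 0" and \<delta>H: "\<And>y. norm (y - e) < \<delta> \<Longrightarrow> norm (F y - F e - J (y - e)) \<le> \<epsilon> * norm (y - e)"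
    using FJ \<epsilon> unfolding has_derivative_at_alt by meson
  define \<rho> where "\<rho> = min \<delta> R"
  have \<rho>: "\<rho> > 0" "\<rho> \<le> R" "\<rho> \<le> \<delta>" using \<delta> R by (auto simp: \<rho>_def)
  obtain G where Glip: "\<And>x y. norm (G x - G y) \<le> L * norm (x - y)" and GF0: "\<And>x. norm (x - e) < R \<Longrightarrow> G x = F x"
    using clamp_G[OF R lip L] by blast
  show ?thesis
  proof (rule chetaev_abstract[where W="\<lambda>x. ?V (x - e)" and DW="\<lambda>x. ?D (x - e)" and \<rho>=\<rho> and cb=C'
        and \<kappa>="c3 / 2" and G=G and L=L])
    show "\<And>x. ((\<lambda>x. ?V (x - e)) has_derivative ?D (x - e)) (at x)" by (rule Vq_deriv)
    show "\<rho> > 0" "C' > 0" "c3 / 2 > 0" using \<rho> C' c3 by auto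
    show "?V (x - e) \<le> C' * (norm (x - e))^2" for x
      using Vq_up[of wa wb wc La Lb Lc "x - e"] C'(2) mult_right_mono[OF C'(2), of "(norm (x - e))^2"] by simp
    show "\<And>x y. norm (G x - G y) \<le> L * norm (x - y)" by (rule Glip)
    show "L > 0" by (rule L)
    show "\<And>x. norm (x - e) < \<rho> \<Longrightarrow> G x = F x" using GF0 \<rho> by force
    show "\<And>d. d > 0 \<Longrightarrow> \<exists>y\<in>S. norm (y - e) < d \<and> ?V (y - e) > 0" by (rule start)
    fix x assume nx: "norm (x - e) < \<rho>"
    define h where "h = x - e"
    define r where "r = F x - J h"
    have nr: "norm r \<le> \<epsilon> * norm h" using \<delta>H[of x] nx \<rho> Fe by (simp add: r_def h_def)
    have Fx: "F x = J h + r" by (simp add: r_def)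
    have "- ?D h r \<le> \<bar>?D h r\<bar>" by simp
    also have "\<dots> \<le> 2 * ?C * (norm h * norm r)" by (rule Dq_bound)
    also have "\<dots> \<le> C' * (norm h * (\<epsilon> * norm h))"
      using C' nr by (intro mult_mono) (auto simp: C'_def)
    also have "\<dots> = c3 / 2 * (norm h)^2" using C' by (simp add: \<epsilon>_def power2_eq_square)
    finally have D2: "- ?D h r \<le> c3 / 2 * (norm h)^2" .
    have D1: "?D h (J h) \<ge> c3 * (norm h)^2" using c3(2)[of h] by simp
    have "?D h (F x) = ?D h (J h) + ?D h r" by (simp add: Fx Dq_add)
    also have "\<dots> \<ge> c3 / 2 * (norm h)^2" using D1 D2 by simp
    finally show "c3 / 2 * (norm (x - e))^2 \<le> ?D (x - e) (F x)" by (simp add: h_def)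
  qed
qed

type_synonym R3 = "real \<times> real \<times> real"

lemma coord_le:
  fixes h :: R3
  shows "\<bar>fst h\<bar> \<le> norm h" "\<bar>fst (snd h)\<bar> \<le> norm h" "\<bar>snd (snd h)\<bar> \<le> norm h"
proof -
  have a: "norm (fst h) \<le> norm h" using norm_fst_le[of "fst h" "snd h"] by simp
  have b: "norm (snd h) \<le> norm h" using norm_snd_le[of "snd h" "fst h"] by simp
  have c: "norm (fst (snd h)) \<le> norm (snd h)" using norm_fst_le[of "fst (snd h)" "snd (snd h)"] by simp
  have d: "norm (snd (snd h)) \<le> norm (snd h)" using norm_snd_le[of "snd (snd h)" "fst (snd h)"] by simp
  show "\<bar>fst h\<bar> \<le> norm h" using a by simp
  show "\<bar>fst (snd h)\<bar> \<le> norm h" using b c by simp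
  show "\<bar>snd (snd h)\<bar> \<le> norm h" using b d by simp
qed

lemma norm3_le: "norm (a, b, c::real) \<le> \<bar>a\<bar> + \<bar>b\<bar> + \<bar>c\<bar>"
proof -
  have "norm (a, b, c) \<le> norm a + norm (b, c)" by (rule norm_Pair_le)
  also have "norm (b, c) \<le> norm b + norm c" by (rule norm_Pair_le)
  finally show ?thesis by simp
qed

lemma Phi2_alt: "Phi2 r \<rho> \<sigma> \<mu> \<delta> \<nu> \<eta> \<gamma> X =
  (r * \<rho> * snd (snd X) * exp (- \<sigma> * (fst X + fst (snd X) + snd (snd X))) - \<mu> * fst X,
   (1 - r) * \<rho> * snd (snd X) * exp (- \<sigma> * (fst X + fst (snd X) + snd (snd X))) - \<nu> * \<gamma> * fst X + \<eta> * snd (snd X) - \<delta> * fst (snd X),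
   \<nu> * \<gamma> * fst X - \<eta> * snd (snd X) - \<delta> * snd (snd X))"
  by (simp add: Phi2_def split_def)

definition Jp :: "real \<Rightarrow> real \<Rightarrow> real \<Rightarrow> real \<Rightarrow> real \<Rightarrow> real \<Rightarrow> real \<Rightarrow> real \<Rightarrow> R3 \<Rightarrow> R3 \<Rightarrow> R3" where
  "Jp r \<rho> \<sigma> \<mu> \<delta> \<nu> \<eta> \<gamma> p h =
    (r * \<rho> * (exp (- \<sigma> * (fst p + fst (snd p) + snd (snd p))) * snd (snd h)
        - \<sigma> * snd (snd p) * exp (- \<sigma> * (fst p + fst (snd p) + snd (snd p))) * (fst h + fst (snd h) + snd (snd h))) - \<mu> * fst h,
     (1 - r) * \<rho> * (exp (- \<sigma> * (fst p + fst (snd p) + snd (snd p))) * snd (snd h)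
        - \<sigma> * snd (snd p) * exp (- \<sigma> * (fst p + fst (snd p) + snd (snd p))) * (fst h + fst (snd h) + snd (snd h)))
        - \<nu> * \<gamma> * fst h + \<eta> * snd (snd h) - \<delta> * fst (snd h),
     \<nu> * \<gamma> * fst h - \<eta> * snd (snd h) - \<delta> * snd (snd h))"

lemma Phi2_deriv: "(Phi2 r \<rho> \<sigma> \<mu> \<delta> \<nu> \<eta> \<gamma> has_derivative Jp r \<rho> \<sigma> \<mu> \<delta> \<nu> \<eta> \<gamma> p) (at p within S)"
  unfolding Phi2_alt[abs_def] Jp_def[abs_def]
  by (auto intro!: derivative_eq_intros simp: fun_eq_iff algebra_simps)

lemma Jp_bound:
  fixes p h :: R3
  assumes r: "0 < r" "r < 1" and pos: "\<rho> > 0" "\<sigma> > 0" "\<mu> > 0" "\<delta> > 0" "\<nu> > 0" "\<eta> > 0" "\<gamma> > 0"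
    and pB: "norm p \<le> B"
  shows "norm (Jp r \<rho> \<sigma> \<mu> \<delta> \<nu> \<eta> \<gamma> p h) \<le> (\<rho> * ((1 + 3*\<sigma>*B) * exp (3*\<sigma>*B)) + \<mu> + 2*\<nu>*\<gamma> + 2*\<eta> + 2*\<delta>) * norm h"
proof -
  define n where "n = norm h"
  define E where "E = exp (- \<sigma> * (fst p + fst (snd p) + snd (snd p)))"
  define S where "S = fst h + fst (snd h) + snd (snd h)"
  define T where "T = E * snd (snd h) - \<sigma> * snd (snd p) * E * S"
  define X where "X = (1 + 3*\<sigma>*B) * exp (3*\<sigma>*B)"
  have hb: "\<bar>fst h\<bar> \<le> n" "\<bar>fst (snd h)\<bar> \<le> n" "\<bar>snd (snd h)\<bar> \<le> n" using coord_le[of h] by (auto simp: n_def)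
  have pb: "\<bar>fst p\<bar> \<le> B" "\<bar>fst (snd p)\<bar> \<le> B" "\<bar>snd (snd p)\<bar> \<le> B" using coord_le[of p] pB by auto
  have B0: "B \<ge> 0" using pB norm_ge_zero order_trans by blast
  have n0: "n \<ge> 0" by (simp add: n_def)
  have Sb: "\<bar>S\<bar> \<le> 3 * n" using hb by (simp add: S_def)
  have "- \<sigma> * (fst p + fst (snd p) + snd (snd p)) \<le> \<sigma> * (3 * B)"
  proof -
    have "- (fst p + fst (snd p) + snd (snd p)) \<le> 3 * B" using pb by linarith
    then show ?thesis using pos(2) by (metis mult_left_mono less_imp_le mult_minus_left mult_minus_right)
  qed
  then have Eb: "E \<le> exp (3*\<sigma>*B)" unfolding E_def by (simp add: mult.assoc)
  have E0: "E > 0" by (simp add: E_def)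
  have t1: "\<bar>E * snd (snd h)\<bar> \<le> exp (3*\<sigma>*B) * n"
  proof -
    have "\<bar>E * snd (snd h)\<bar> = E * \<bar>snd (snd h)\<bar>" using E0 by (simp add: abs_mult)
    also have "\<dots> \<le> exp (3*\<sigma>*B) * n" by (rule mult_mono[OF Eb hb(3)]) (use E0 in auto)
    finally show ?thesis .
  qed
  have "\<bar>\<sigma> * snd (snd p) * E * S\<bar> = \<sigma> * (\<bar>snd (snd p)\<bar> * (E * \<bar>S\<bar>))"
    using pos E0 by (simp add: abs_mult mult_ac)
  also have "\<dots> \<le> \<sigma> * (B * (exp (3*\<sigma>*B) * (3 * n)))"
  proof -
    have a: "E * \<bar>S\<bar> \<le> exp (3*\<sigma>*B) * (3 * n)" by (rule mult_mono[OF Eb Sb]) (use E0 in auto)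
    have b: "\<bar>snd (snd p)\<bar> * (E * \<bar>S\<bar>) \<le> B * (exp (3*\<sigma>*B) * (3 * n))" by (rule mult_mono[OF pb(3) a]) (simp_all add: B0 less_imp_le[OF E0])
    show ?thesis by (rule mult_left_mono[OF b]) (use pos in auto)
  qed
  finally have t2: "\<bar>\<sigma> * snd (snd p) * E * S\<bar> \<le> 3 * \<sigma> * B * exp (3*\<sigma>*B) * n" by (simp add: mult_ac)
  have Tb: "\<bar>T\<bar> \<le> X * n"
  proof -
    have "\<bar>T\<bar> \<le> \<bar>E * snd (snd h)\<bar> + \<bar>\<sigma> * snd (snd p) * E * S\<bar>" unfolding T_def by (rule abs_triangle_ineq4)
    also have "\<dots> \<le> exp (3*\<sigma>*B) * n + 3 * \<sigma> * B * exp (3*\<sigma>*B) * n" using t1 t2 by linarith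
    also have "\<dots> = X * n" by (simp add: X_def algebra_simps)
    finally show ?thesis .
  qed
  have rT: "\<bar>r * \<rho> * T\<bar> \<le> r * \<rho> * (X * n)"
    using Tb r pos by (simp add: abs_mult mult_left_mono)
  have rT2: "\<bar>(1 - r) * \<rho> * T\<bar> \<le> (1 - r) * \<rho> * (X * n)"
    using Tb r pos by (simp add: abs_mult mult_left_mono)
  have c1: "\<bar>\<mu> * fst h\<bar> \<le> \<mu> * n" using hb pos by (simp add: abs_mult mult_left_mono)
  have c2: "\<bar>\<nu> * \<gamma> * fst h\<bar> \<le> \<nu> * \<gamma> * n" using hb pos by (simp add: abs_mult mult_left_mono)
  have c3: "\<bar>\<eta> * snd (snd h)\<bar> \<le> \<eta> * n" using hb pos by (simp add: abs_mult mult_left_mono)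
  have c4: "\<bar>\<delta> * fst (snd h)\<bar> \<le> \<delta> * n" using hb pos by (simp add: abs_mult mult_left_mono)
  have c5: "\<bar>\<delta> * snd (snd h)\<bar> \<le> \<delta> * n" using hb pos by (simp add: abs_mult mult_left_mono)
  have J: "Jp r \<rho> \<sigma> \<mu> \<delta> \<nu> \<eta> \<gamma> p h = (r * \<rho> * T - \<mu> * fst h,
      (1 - r) * \<rho> * T - \<nu> * \<gamma> * fst h + \<eta> * snd (snd h) - \<delta> * fst (snd h),
      \<nu> * \<gamma> * fst h - \<eta> * snd (snd h) - \<delta> * snd (snd h))"
    by (simp add: Jp_def T_def E_def S_def)
  have "norm (Jp r \<rho> \<sigma> \<mu> \<delta> \<nu> \<eta> \<gamma> p h) \<le> \<bar>r * \<rho> * T - \<mu> * fst h\<bar>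
      + \<bar>(1 - r) * \<rho> * T - \<nu> * \<gamma> * fst h + \<eta> * snd (snd h) - \<delta> * fst (snd h)\<bar>
      + \<bar>\<nu> * \<gamma> * fst h - \<eta> * snd (snd h) - \<delta> * snd (snd h)\<bar>"
    unfolding J by (rule norm3_le)
  also have "\<dots> \<le> (r * \<rho> * (X * n) + \<mu> * n) + ((1 - r) * \<rho> * (X * n) + \<nu> * \<gamma> * n + \<eta> * n + \<delta> * n)
      + (\<nu> * \<gamma> * n + \<eta> * n + \<delta> * n)"
  proof -
    have i1: "\<bar>r * \<rho> * T - \<mu> * fst h\<bar> \<le> r * \<rho> * (X * n) + \<mu> * n"
      using abs_triangle_ineq4[of "r * \<rho> * T" "\<mu> * fst h"] rT c1 by linarith
    have i2: "\<bar>(1 - r) * \<rho> * T - \<nu> * \<gamma> * fst h + \<eta> * snd (snd h) - \<delta> * fst (snd h)\<bar>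
        \<le> \<bar>(1 - r) * \<rho> * T\<bar> + \<bar>\<nu> * \<gamma> * fst h\<bar> + \<bar>\<eta> * snd (snd h)\<bar> + \<bar>\<delta> * fst (snd h)\<bar>"
      by (smt (verit))
    have i3: "\<bar>\<nu> * \<gamma> * fst h - \<eta> * snd (snd h) - \<delta> * snd (snd h)\<bar>
        \<le> \<bar>\<nu> * \<gamma> * fst h\<bar> + \<bar>\<eta> * snd (snd h)\<bar> + \<bar>\<delta> * snd (snd h)\<bar>"
      by (smt (verit))
    show ?thesis using i1 i2 i3 rT2 c2 c3 c4 c5 by linarith
  qed
  also have "\<dots> = (\<rho> * X + \<mu> + 2*\<nu>*\<gamma> + 2*\<eta> + 2*\<delta>) * n" by (simp add: algebra_simps)
  finally show ?thesis by (simp add: n_def X_def)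
qed

lemma Phi2_lip:
  fixes e :: R3
  assumes r: "0 < r" "r < 1" and pos: "\<rho> > 0" "\<sigma> > 0" "\<mu> > 0" "\<delta> > 0" "\<nu> > 0" "\<eta> > 0" "\<gamma> > 0"
    and R: "R > 0"
  shows "\<exists>L>0. \<forall>x\<in>cball e R. \<forall>y\<in>cball e R.
    norm (Phi2 r \<rho> \<sigma> \<mu> \<delta> \<nu> \<eta> \<gamma> x - Phi2 r \<rho> \<sigma> \<mu> \<delta> \<nu> \<eta> \<gamma> y) \<le> L * norm (x - y)"
proof -
  define B where "B = norm e + R"
  define K where "K = \<rho> * ((1 + 3*\<sigma>*B) * exp (3*\<sigma>*B)) + \<mu> + 2*\<nu>*\<gamma> + 2*\<eta> + 2*\<delta>"
  have B0: "B \<ge> 0" using R by (simp add: B_def)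
  have Kpos: "K > 0" unfolding K_def using pos B0 by (intro add_pos_pos add_nonneg_pos) (auto intro!: mult_nonneg_nonneg)
  have "norm (Phi2 r \<rho> \<sigma> \<mu> \<delta> \<nu> \<eta> \<gamma> x - Phi2 r \<rho> \<sigma> \<mu> \<delta> \<nu> \<eta> \<gamma> y) \<le> K * norm (x - y)"
    if x: "x \<in> cball e R" and y: "y \<in> cball e R" for x y
  proof (rule differentiable_bound[OF convex_cball _ _ x y])
    fix z assume z: "z \<in> cball e R"
    show "(Phi2 r \<rho> \<sigma> \<mu> \<delta> \<nu> \<eta> \<gamma> has_derivative Jp r \<rho> \<sigma> \<mu> \<delta> \<nu> \<eta> \<gamma> z) (at z within cball e R)"
      by (rule Phi2_deriv)
    have "norm z \<le> B"
    proof -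
      have "norm z \<le> norm e + norm (z - e)" by (metis norm_triangle_sub add.commute)
      also have "norm (z - e) \<le> R" using z by (simp add: dist_norm norm_minus_commute)
      finally show ?thesis by (simp add: B_def)
    qed
    then show "onorm (Jp r \<rho> \<sigma> \<mu> \<delta> \<nu> \<eta> \<gamma> z) \<le> K"
      unfolding K_def by (intro onorm_le Jp_bound[OF r pos])
  qed
  then show ?thesis using Kpos by blast
qed

lemma mix:
  fixes a b \<delta> u v :: real
  assumes a: "a > 0" and b: "b > 0" and d: "\<delta> > 0"
  shows "\<exists>\<kappa>>0. \<forall>X Y Z Q0. Q0 \<ge> a * X^2 + b * Y^2 \<and> (X \<noteq> 0 \<or> Y \<noteq> 0 \<or> Z \<noteq> 0)
           \<longrightarrow> Q0 + \<kappa> * \<delta> * Z^2 + \<kappa> * Z * (u * X + v * Y) > 0"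
proof -
  define m where "m = min a b"
  define \<kappa> where "\<kappa> = \<delta> * m / (2 * (u^2 + v^2) + 1)"
  have m: "m > 0" "m \<le> a" "m \<le> b" using a b by (auto simp: m_def)
  have den: "2 * (u^2 + v^2) + 1 > 0" by (simp add: add_nonneg_pos)
  have k0: "\<kappa> > 0" using d m den by (simp add: \<kappa>_def)
  have X: "\<delta> * m \<le> \<delta> * a" "\<delta> * m \<le> \<delta> * b" using m d by (simp_all add: mult_left_mono)
  have ku: "\<kappa> * u^2 \<le> \<delta> * a / 2" "\<kappa> * v^2 \<le> \<delta> * b / 2"
  proof -
    have "\<kappa> * u^2 = \<delta> * m * (u^2 / (2 * (u^2 + v^2) + 1))" by (simp add: \<kappa>_def)
    also have "u^2 / (2 * (u^2 + v^2) + 1) \<le> 1/2" using den by (simp add: field_simps)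
    then have "\<delta> * m * (u^2 / (2 * (u^2 + v^2) + 1)) \<le> \<delta> * m * (1/2)" using d m by (intro mult_left_mono) auto
    finally show "\<kappa> * u^2 \<le> \<delta> * a / 2" using X by linarith
    have "\<kappa> * v^2 = \<delta> * m * (v^2 / (2 * (u^2 + v^2) + 1))" by (simp add: \<kappa>_def)
    also have "v^2 / (2 * (u^2 + v^2) + 1) \<le> 1/2" using den by (simp add: field_simps)
    then have "\<delta> * m * (v^2 / (2 * (u^2 + v^2) + 1)) \<le> \<delta> * m * (1/2)" using d m by (intro mult_left_mono) auto
    finally show "\<kappa> * v^2 \<le> \<delta> * b / 2" using X by linarith
  qed
  have "Q0 + \<kappa> * \<delta> * Z^2 + \<kappa> * Z * (u * X + v * Y) > 0"
    if Q: "Q0 \<ge> a * X^2 + b * Y^2" and nz: "X \<noteq> 0 \<or> Y \<noteq> 0 \<or> Z \<noteq> 0" for X Y Z Q0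
  proof -
    define w where "w = u * X + v * Y"
    have e1: "\<kappa> * \<delta> / 2 * Z^2 + \<kappa> * Z * w + \<kappa> / (2 * \<delta>) * w^2 = \<kappa> / (2 * \<delta>) * (\<delta> * Z + w)^2"
      using d by (simp add: field_simps power2_eq_square)
    have "0 \<le> \<kappa> / (2 * \<delta>) * (\<delta> * Z + w)^2" using k0 d by simp
    then have s1: "\<kappa> * Z * w \<ge> - (\<kappa> * \<delta> / 2 * Z^2) - \<kappa> / (2 * \<delta>) * w^2" using e1 by linarith
    have e2: "2 * u^2 * X^2 + 2 * v^2 * Y^2 - w^2 = (u * X - v * Y)^2"
      by (simp add: w_def power2_eq_square algebra_simps)
    have s2: "w^2 \<le> 2 * u^2 * X^2 + 2 * v^2 * Y^2" using e2 zero_le_power2[of "u * X - v * Y"] by linarith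
    have s3: "\<kappa> / (2 * \<delta>) * w^2 \<le> \<kappa> / (2 * \<delta>) * (2 * u^2 * X^2 + 2 * v^2 * Y^2)"
      using s2 k0 d by (intro mult_left_mono) auto
    have s4: "\<kappa> / (2 * \<delta>) * (2 * u^2 * X^2 + 2 * v^2 * Y^2) = (\<kappa> * u^2 / \<delta>) * X^2 + (\<kappa> * v^2 / \<delta>) * Y^2"
      using d by (simp add: field_simps)
    have s5: "\<kappa> * u^2 / \<delta> \<le> a / 2" "\<kappa> * v^2 / \<delta> \<le> b / 2" using ku d by (simp_all add: field_simps)
    have s6: "(\<kappa> * u^2 / \<delta>) * X^2 \<le> a / 2 * X^2" "(\<kappa> * v^2 / \<delta>) * Y^2 \<le> b / 2 * Y^2"
      using mult_right_mono[OF s5(1), of "X^2"] mult_right_mono[OF s5(2), of "Y^2"] by simp_all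
    have pos: "a / 2 * X^2 + b / 2 * Y^2 + \<kappa> * \<delta> / 2 * Z^2 > 0"
    proof -
      have t: "0 \<le> a / 2 * X^2" "0 \<le> b / 2 * Y^2" "0 \<le> \<kappa> * \<delta> / 2 * Z^2" using a b k0 d by auto
      from nz show ?thesis
      proof (elim disjE)
        assume "X \<noteq> 0" then have "0 < a / 2 * X^2" using a by simp
        then show ?thesis using t by linarith
      next
        assume "Y \<noteq> 0" then have "0 < b / 2 * Y^2" using b by simp
        then show ?thesis using t by linarith
      next
        assume "Z \<noteq> 0" then have "0 < \<kappa> * \<delta> / 2 * Z^2" using k0 d by simp
        then show ?thesis using t by linarith
      qed
    qed
    have "\<kappa> * Z * (u * X + v * Y) = \<kappa> * Z * w" by (simp add: w_def)
    moreover have "\<kappa> * \<delta> / 2 * Z^2 = (\<kappa> * \<delta> * Z^2) / 2" "a / 2 * X^2 = (a * X^2) / 2" "b / 2 * Y^2 = (b * Y^2) / 2"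
      by simp_all
    ultimately show ?thesis using Q s1 s3 s4 s6 pos by linarith
  qed
  then show ?thesis using k0 by blast
qed

lemma quad2:
  fixes P Q C X Y :: real
  assumes P: "P > 0" and Q: "Q > 0"
  shows "P * X^2 - 2 * C * X * Y + Q * Y^2 \<ge> (P * Q - C^2) / (2 * Q) * X^2 + (P * Q - C^2) / (2 * P) * Y^2"
proof -
  have "P * X^2 - 2 * C * X * Y + Q * Y^2 - ((P * Q - C^2) / (2 * Q) * X^2 + (P * Q - C^2) / (2 * P) * Y^2)
      = P / 2 * (X - C * Y / P)^2 + Q / 2 * (Y - C * X / Q)^2"
    using P Q by (simp add: field_simps power2_eq_square)
  moreover have "0 \<le> P / 2 * (X - C * Y / P)^2 + Q / 2 * (Y - C * X / Q)^2" using P Q by simp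
  ultimately show ?thesis by linarith
qed

lemma R3_nz: "(h::R3) \<noteq> 0 \<Longrightarrow> fst h \<noteq> 0 \<or> fst (snd h) \<noteq> 0 \<or> snd (snd h) \<noteq> 0"
  by (cases h) (auto simp: zero_prod_def)

lemma inner3: "inner (a, b, c) (h::R3) = a * fst h + b * fst (snd h) + c * snd (snd h)"
  by (cases h) simp

lemma Phi2_zero: "Phi2 r \<rho> \<sigma> \<mu> \<delta> \<nu> \<eta> \<gamma> (0, 0, 0) = 0"
  by (simp add: Phi2_def zero_prod_def)

lemma Jp0: "Jp r \<rho> \<sigma> \<mu> \<delta> \<nu> \<eta> \<gamma> (0,0,0) h =
   (r * \<rho> * snd (snd h) - \<mu> * fst h,
    (1 - r) * \<rho> * snd (snd h) - \<nu> * \<gamma> * fst h + \<eta> * snd (snd h) - \<delta> * fst (snd h),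
    \<nu> * \<gamma> * fst h - \<eta> * snd (snd h) - \<delta> * snd (snd h))"
  by (simp add: Jp_def)

theorem part_i:
  assumes r: "0 < r" "r < 1" and pos: "\<rho> > 0" "\<sigma> > 0" "\<mu> > 0" "\<delta> > 0" "\<nu> > 0" "\<eta> > 0" and g: "\<gamma> \<ge> 1"
    and N: "N_M r \<rho> \<mu> \<delta> \<nu> \<eta> \<gamma> < 1"
  shows "loc_asym_stable_in S (Phi2 r \<rho> \<sigma> \<mu> \<delta> \<nu> \<eta> \<gamma>) (0,0,0)"
proof -
  have g0: "\<gamma> > 0" using g by simp
  define P where "P = \<nu> * \<gamma> * \<mu>"
  define Qq where "Qq = r * \<rho> * (\<eta> + \<delta>)"
  define Cc where "Cc = r * \<rho> * \<nu> * \<gamma>"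
  define \<beta> where "\<beta> = (1 - r) * \<rho> + \<eta>"
  have P0: "P > 0" and Q0: "Qq > 0" and C0: "Cc > 0" using r pos g0 by (simp_all add: P_def Qq_def Cc_def)
  have "Cc < \<mu> * (\<delta> + \<eta>)" using N pos unfolding N_M_def Cc_def
    by (simp add: divide_less_eq mult_ac add_pos_pos)
  then have "Cc * Cc < Cc * (\<mu> * (\<delta> + \<eta>))" using C0 by simp
  also have "Cc * (\<mu> * (\<delta> + \<eta>)) = P * Qq" by (simp add: Cc_def P_def Qq_def algebra_simps)
  finally have CPQ: "Cc^2 < P * Qq" by (simp add: power2_eq_square)
  define ad where "ad = P * Qq - Cc^2"
  have ad: "ad > 0" using CPQ by (simp add: ad_def)
  obtain \<kappa> where k0: "\<kappa> > 0" and kH: "\<And>X Y Z Q0. Q0 \<ge> ad / (2 * Qq) * X^2 + ad / (2 * P) * Y^2 \<and> (X \<noteq> 0 \<or> Y \<noteq> 0 \<or> Z \<noteq> 0)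
           \<Longrightarrow> Q0 + \<kappa> * \<delta> * Z^2 + \<kappa> * Z * ((\<nu> * \<gamma>) * X + (- \<beta>) * Y) > 0"
    using mix[of "ad / (2 * Qq)" "ad / (2 * P)" \<delta> "\<nu> * \<gamma>" "- \<beta>"] ad P0 Q0 pos by auto
  obtain L where L: "L > 0" and lip: "\<forall>x\<in>cball (0,0,0) 1. \<forall>y\<in>cball (0,0,0) 1.
      norm (Phi2 r \<rho> \<sigma> \<mu> \<delta> \<nu> \<eta> \<gamma> x - Phi2 r \<rho> \<sigma> \<mu> \<delta> \<nu> \<eta> \<gamma> y) \<le> L * norm (x - y)"
    using Phi2_lip[OF r pos g0, of 1 "(0,0,0)"] by auto
  show ?thesis
  proof (rule quad_stable[where J="Jp r \<rho> \<sigma> \<mu> \<delta> \<nu> \<eta> \<gamma> (0,0,0)" and wa="\<nu> * \<gamma>" and La="(1,0,0)"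
        and wb="r * \<rho>" and Lb="(0,0,1)" and wc=\<kappa> and Lc="(0,1,0)" and R=1 and L=L])
    show "Phi2 r \<rho> \<sigma> \<mu> \<delta> \<nu> \<eta> \<gamma> (0,0,0) = 0" by (rule Phi2_zero)
    show "(Phi2 r \<rho> \<sigma> \<mu> \<delta> \<nu> \<eta> \<gamma> has_derivative Jp r \<rho> \<sigma> \<mu> \<delta> \<nu> \<eta> \<gamma> (0,0,0)) (at (0,0,0))"
      by (rule Phi2_deriv)
    show "(1::real) > 0" "L > 0" using L by auto
    show "\<And>x y. x \<in> cball (0,0,0) 1 \<Longrightarrow> y \<in> cball (0,0,0) 1 \<Longrightarrow>
        norm (Phi2 r \<rho> \<sigma> \<mu> \<delta> \<nu> \<eta> \<gamma> x - Phi2 r \<rho> \<sigma> \<mu> \<delta> \<nu> \<eta> \<gamma> y) \<le> L * norm (x - y)"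
      using lip by blast
  next
    fix h :: R3 assume h: "h \<noteq> 0"
    define X where "X = fst h"
    define Z where "Z = fst (snd h)"
    define Y where "Y = snd (snd h)"
    have nz: "X \<noteq> 0 \<or> Y \<noteq> 0 \<or> Z \<noteq> 0" using R3_nz[OF h] by (auto simp: X_def Y_def Z_def)
    have "Vq (\<nu> * \<gamma>) (r * \<rho>) \<kappa> (1, 0, 0) (0, 0, 1) (0, 1, 0) h = \<nu> * \<gamma> * X^2 + r * \<rho> * Y^2 + \<kappa> * Z^2"
      by (simp add: Vq_def inner3 X_def Y_def Z_def)
    moreover have "\<nu> * \<gamma> * X^2 + r * \<rho> * Y^2 + \<kappa> * Z^2 > 0"
    proof -
      have t: "0 \<le> \<nu> * \<gamma> * X^2" "0 \<le> r * \<rho> * Y^2" "0 \<le> \<kappa> * Z^2" using pos g0 r k0 by auto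
      from nz show ?thesis
      proof (elim disjE)
        assume "X \<noteq> 0" then have "0 < \<nu> * \<gamma> * X^2" using pos g0 by simp
        then show ?thesis using t by linarith
      next
        assume "Y \<noteq> 0" then have "0 < r * \<rho> * Y^2" using pos r by simp
        then show ?thesis using t by linarith
      next
        assume "Z \<noteq> 0" then have "0 < \<kappa> * Z^2" using k0 by simp
        then show ?thesis using t by linarith
      qed
    qed
    ultimately show "Vq (\<nu> * \<gamma>) (r * \<rho>) \<kappa> (1, 0, 0) (0, 0, 1) (0, 1, 0) h > 0" by simp
  next
    fix h :: R3 assume h: "h \<noteq> 0"
    define X where "X = fst h"
    define Z where "Z = fst (snd h)"
    define Y where "Y = snd (snd h)"
    have nz: "X \<noteq> 0 \<or> Y \<noteq> 0 \<or> Z \<noteq> 0" using R3_nz[OF h] by (auto simp: X_def Y_def Z_def)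
    define Q0 where "Q0 = P * X^2 - 2 * Cc * X * Y + Qq * Y^2"
    have Qb: "Q0 \<ge> ad / (2 * Qq) * X^2 + ad / (2 * P) * Y^2"
      unfolding Q0_def ad_def by (rule quad2[OF P0 Q0])
    have main: "Q0 + \<kappa> * \<delta> * Z^2 + \<kappa> * Z * ((\<nu> * \<gamma>) * X + (- \<beta>) * Y) > 0"
      using kH Qb nz by blast
    have "Dq (\<nu> * \<gamma>) (r * \<rho>) \<kappa> (1, 0, 0) (0, 0, 1) (0, 1, 0) h (Jp r \<rho> \<sigma> \<mu> \<delta> \<nu> \<eta> \<gamma> (0, 0, 0) h)
        = - 2 * (Q0 + \<kappa> * \<delta> * Z^2 + \<kappa> * Z * ((\<nu> * \<gamma>) * X + (- \<beta>) * Y))"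
      by (simp add: Dq_def inner3 Jp0 X_def Y_def Z_def Q0_def P_def Qq_def Cc_def \<beta>_def power2_eq_square algebra_simps)
    then show "Dq (\<nu> * \<gamma>) (r * \<rho>) \<kappa> (1, 0, 0) (0, 0, 1) (0, 1, 0) h (Jp r \<rho> \<sigma> \<mu> \<delta> \<nu> \<eta> \<gamma> (0, 0, 0) h) < 0"
      using main by simp
  qed
qed

lemma exists_shift:
  fixes a1 a2 a3 :: real
  assumes "a1 > 0" "a3 > 0" "a1 * a2 - a3 > 0"
  shows "\<exists>l>0. a1 - 3*l > 0 \<and> a3 - a2*l + a1*l^2 - l^3 > 0 \<and>
     (a1 - 3*l) * (a2 - 2*a1*l + 3*l^2) - (a3 - a2*l + a1*l^2 - l^3) > 0"
proof -
  have t1: "((\<lambda>l. a1 - 3*l) \<longlongrightarrow> a1 - 3*0) (at_right 0)" by (intro tendsto_intros)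
  have t2: "((\<lambda>l. a3 - a2*l + a1*l^2 - l^3) \<longlongrightarrow> a3 - a2*0 + a1*0^2 - 0^3) (at_right 0)" by (intro tendsto_intros)
  have t3: "((\<lambda>l. (a1 - 3*l) * (a2 - 2*a1*l + 3*l^2) - (a3 - a2*l + a1*l^2 - l^3)) \<longlongrightarrow>
      (a1 - 3*0) * (a2 - 2*a1*0 + 3*0^2) - (a3 - a2*0 + a1*0^2 - 0^3)) (at_right 0)" by (intro tendsto_intros)
  have "\<forall>\<^sub>F l in at_right 0. 0 < l \<and> a1 - 3*l > 0 \<and> a3 - a2*l + a1*l^2 - l^3 > 0 \<and>
     (a1 - 3*l) * (a2 - 2*a1*l + 3*l^2) - (a3 - a2*l + a1*l^2 - l^3) > 0"
  proof -
    have e1: "\<forall>\<^sub>F l in at_right 0. 0 < a1 - 3*l" using order_tendstoD(1)[OF t1, of 0] assms by simp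
    have e2: "\<forall>\<^sub>F l in at_right 0. 0 < a3 - a2*l + a1*l^2 - l^3" using order_tendstoD(1)[OF t2, of 0] assms by simp
    have e3: "\<forall>\<^sub>F l in at_right 0. 0 < (a1 - 3*l) * (a2 - 2*a1*l + 3*l^2) - (a3 - a2*l + a1*l^2 - l^3)"
      using order_tendstoD(1)[OF t3, of 0] assms by simp
    show ?thesis using eventually_conj[OF eventually_at_right_less[of "0::real"] eventually_conj[OF e1 eventually_conj[OF e2 e3]]]
      by simp
  qed
  then obtain l where "0 < l \<and> a1 - 3*l > 0 \<and> a3 - a2*l + a1*l^2 - l^3 > 0 \<and>
     (a1 - 3*l) * (a2 - 2*a1*l + 3*l^2) - (a3 - a2*l + a1*l^2 - l^3) > 0"
    using eventually_happens'[OF trivial_limit_at_right_real] by blast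
  then show ?thesis by blast
qed

lemma companion_id:
  fixes k p q m g hh f l Z S M :: real
  assumes "a1 = q + f" and "a2 = q * f - m * hh + k * p" and "a3 = k * (p * f - m * g)"
  and "b1 = a1 - 3*l" and "b2 = a2 - 2*a1*l + 3*l^2" and "b3 = a3 - a2*l + a1*l^2 - l^3"
  and "y1 = Z" and "y2 = l * Z - k * S" and "y3 = (l^2 - k * p) * Z + k * (q - 2 * l) * S + k * m * M"
  and "ZJ = - k * S" and "SJ = p * Z - q * S - m * M" and "MJ = g * Z - hh * S - f * M"
  shows "ZJ = y2 - l * y1"
    and "l * ZJ - k * SJ = y3 - l * y2"
    and "(l^2 - k * p) * ZJ + k * (q - 2 * l) * SJ + k * m * MJ = - b3 * y1 - b2 * y2 - b1 * y3 - l * y3"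
  unfolding assms by (simp_all add: power2_eq_square power3_eq_cube algebra_simps)

lemma lyap_id:
  fixes b1 b2 b3 l y1 y2 y3 :: real
  shows "2 * (b1 / 2 * (y3 + b1 * y2) * ((- b3 * y1 - b2 * y2 - b1 * y3 - l * y3) + b1 * (y3 - l * y2))
        + b3 / 2 * (b1 * y1 + y2) * (b1 * (y2 - l * y1) + (y3 - l * y2))
        + (b1 * b2 - b3) / 2 * y2 * (y3 - l * y2))
     = - b1 * (b1 * b2 - b3) * y2^2 - 2 * l * (b1 / 2 * (y3 + b1 * y2)^2 + b3 / 2 * (b1 * y1 + y2)^2 + (b1 * b2 - b3) / 2 * y2^2)"
  by (simp add: field_simps power2_eq_square)

theorem part_ii_E2:
  assumes r: "0 < r" "r < 1" and pos: "\<rho> > 0" "\<sigma> > 0" "\<mu> > 0" "\<delta> > 0" "\<nu> > 0" "\<eta> > 0" and g: "\<gamma> \<ge> 1"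
    and md: "\<mu> \<ge> \<delta>"
    and N1: "N_M r \<rho> \<mu> \<delta> \<nu> \<eta> \<gamma> > 1" and th1: "theta_M r \<mu> \<delta> \<nu> \<eta> \<gamma> > 1"
  shows "E2 r \<rho> \<sigma> \<mu> \<delta> \<nu> \<eta> \<gamma> \<in> orthant \<and> loc_asym_stable_in S (Phi2 r \<rho> \<sigma> \<mu> \<delta> \<nu> \<eta> \<gamma>) (E2 r \<rho> \<sigma> \<mu> \<delta> \<nu> \<eta> \<gamma>)"
proof -
  have g0: "\<gamma> > 0" using g by simp
  define N where "N = N_M r \<rho> \<mu> \<delta> \<nu> \<eta> \<gamma>"
  define \<theta> where "\<theta> = theta_M r \<mu> \<delta> \<nu> \<eta> \<gamma>"
  define D where "D = \<gamma> * \<nu> * \<theta> + \<eta> + \<delta>"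
  define Lg where "Lg = ln N / \<sigma>"
  define Ms where "Ms = (\<delta> + \<eta>) / D * Lg"
  define As where "As = \<gamma> * \<nu> * (\<theta> - 1) / D * Lg"
  define Us where "Us = \<gamma> * \<nu> / D * Lg"
  have E2eq: "E2 r \<rho> \<sigma> \<mu> \<delta> \<nu> \<eta> \<gamma> = (Ms, As, Us)"
    unfolding E2_def Let_def N_def \<theta>_def D_def Lg_def Ms_def As_def Us_def by simp
  have N1': "N > 1" and th1': "\<theta> > 1" using N1 th1 by (simp_all add: N_def \<theta>_def)
  have N0: "N > 0" using N1' by simp
  have Lg0: "Lg > 0" using N1' pos by (simp add: Lg_def)
  have D0: "D > 0" using th1' pos g0 by (simp add: D_def add_pos_pos)
  have Ms0: "Ms > 0" using D0 Lg0 pos by (simp add: Ms_def)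
  have As0: "As \<ge> 0" using D0 Lg0 pos g0 th1' by (simp add: As_def)
  have Us0: "Us > 0" using D0 Lg0 pos g0 by (simp add: Us_def)
  have orth: "(Ms, As, Us) \<in> orthant" using Ms0 As0 Us0 by (simp add: orthant_def)
  have sum: "Ms + As + Us = Lg"
  proof -
    have "Ms + As + Us = ((\<delta> + \<eta>) + \<gamma> * \<nu> * (\<theta> - 1) + \<gamma> * \<nu>) / D * Lg"
      by (simp add: Ms_def As_def Us_def add_divide_distrib distrib_right)
    also have "(\<delta> + \<eta>) + \<gamma> * \<nu> * (\<theta> - 1) + \<gamma> * \<nu> = D" by (simp add: D_def algebra_simps)
    finally show ?thesis using D0 by simp
  qed
  have Es: "exp (- \<sigma> * (Ms + As + Us)) = 1 / N"
  proof -
    have "- \<sigma> * (Ms + As + Us) = - ln N" using sum pos by (simp add: Lg_def)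
    then show ?thesis using N0 by (simp add: exp_minus inverse_eq_divide)
  qed
  have Es': "exp (- (\<sigma> * (Ms + As + Us))) = 1 / N" using Es by simp
  define a where "a = r * \<rho> / N"
  define b where "b = (1 - r) * \<rho> / N"
  define c where "c = \<rho> / N"
  define u where "u = \<sigma> * Us"
  have a0: "a > 0" and b0: "b > 0" and c0: "c > 0" and u0: "u > 0"
    using r pos N0 Us0 by (simp_all add: a_def b_def c_def u_def)
  have cab: "c = a + b" using N0 by (simp add: a_def b_def c_def field_simps)
  have F3: "a * (\<nu> * \<gamma>) = \<mu> * (\<eta> + \<delta>)"
    unfolding a_def N_def N_M_def using pos r g0 by (simp add: field_simps)
  have F6: "b = \<delta> * \<theta>"
    unfolding b_def N_def N_M_def \<theta>_def theta_M_def using pos r g0 by (simp add: field_simps)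
  have Feq: "Phi2 r \<rho> \<sigma> \<mu> \<delta> \<nu> \<eta> \<gamma> (Ms, As, Us) = 0"
  proof -
    have c1: "r * \<rho> * Us * (1 / N) - \<mu> * Ms = 0"
    proof -
      have "r * \<rho> * Us * (1 / N) = a * (\<nu> * \<gamma>) / D * Lg" by (simp add: a_def Us_def mult_ac)
      also have "\<dots> = \<mu> * Ms" using F3 by (simp add: Ms_def add.commute mult_ac)
      finally show ?thesis by simp
    qed
    have c2: "(1 - r) * \<rho> * Us * (1 / N) - \<nu> * \<gamma> * Ms + \<eta> * Us - \<delta> * As = 0"
    proof -
      have "(1 - r) * \<rho> * Us * (1 / N) = b * Us" by (simp add: b_def)
      also have "\<dots> = \<delta> * \<theta> * Us" by (simp add: F6)
      finally have e: "(1 - r) * \<rho> * Us * (1 / N) = \<delta> * \<theta> * Us" .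
      have "\<delta> * \<theta> * Us - \<nu> * \<gamma> * Ms + \<eta> * Us - \<delta> * As = 0"
        unfolding Us_def Ms_def As_def using D0 by (simp add: field_simps)
      then show ?thesis using e by linarith
    qed
    have c3: "\<nu> * \<gamma> * Ms - \<eta> * Us - \<delta> * Us = 0"
      unfolding Us_def Ms_def using D0 by (simp add: field_simps)
    show ?thesis using c1 c2 c3 by (simp add: Phi2_def Es' zero_prod_def)
  qed
  define J where "J = Jp r \<rho> \<sigma> \<mu> \<delta> \<nu> \<eta> \<gamma> (Ms, As, Us)"
  have JE: "J h = (a * snd (snd h) - a * u * (fst h + fst (snd h) + snd (snd h)) - \<mu> * fst h,
      b * snd (snd h) - b * u * (fst h + fst (snd h) + snd (snd h)) - \<nu> * \<gamma> * fst h + \<eta> * snd (snd h) - \<delta> * fst (snd h),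
      \<nu> * \<gamma> * fst h - \<eta> * snd (snd h) - \<delta> * snd (snd h))" for h
    using N0 by (simp only: J_def Jp_def fst_conv snd_conv Es) (simp add: a_def b_def u_def field_simps)
  define k where "k = \<nu> * \<gamma> * a * u"
  define p where "p = c / \<mu>"
  define q where "q = c * u + \<delta>"
  define m where "m = \<mu> - \<delta> + c * \<nu> * \<gamma> / \<mu>"
  define gg where "gg = a / \<mu>"
  define hh where "hh = a * u"
  define f where "f = \<mu> + \<eta> + \<delta>"
  have k0: "k > 0" and p0: "p > 0" and q0: "q > 0" and gg0: "gg > 0" and hh0: "hh > 0" and f0: "f > 0"
    using pos g0 a0 u0 c0 by (simp_all add: k_def p_def q_def gg_def hh_def f_def add_pos_pos)
  have m0: "m > 0"
  proof -
    have "c * \<nu> * \<gamma> / \<mu> > 0" using c0 pos g0 by simp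
    then show ?thesis using md by (simp add: m_def)
  qed
  define Lz where "Lz = (\<nu> * \<gamma>, 0::real, \<mu>)"
  define Ls where "Ls = (1::real, 1::real, 1::real)"
  define Lm where "Lm = (1::real, 0::real, 0::real)"
  have iZ: "inner Lz (J h) = - k * inner Ls h" for h
  proof -
    have "inner Lz (J h) = (a * (\<nu> * \<gamma>) - \<mu> * (\<eta> + \<delta>)) * snd (snd h) - k * inner Ls h"
      by (simp add: inner3 JE Lz_def Ls_def k_def algebra_simps)
    then show ?thesis using F3 by simp
  qed
  have iS: "inner Ls (J h) = p * inner Lz h - q * inner Ls h - m * inner Lm h" for h
    using pos by (simp add: inner3 JE Lz_def Ls_def Lm_def p_def q_def m_def cab field_simps)
  have F3': "a / \<mu> * (\<nu> * \<gamma>) = \<eta> + \<delta>" using F3 pos by (simp add: field_simps)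
  have iM: "inner Lm (J h) = gg * inner Lz h - hh * inner Ls h - f * inner Lm h" for h
  proof -
    have "gg * inner Lz h - hh * inner Ls h - f * inner Lm h
        = (a / \<mu> * (\<nu> * \<gamma>)) * fst h + a / \<mu> * \<mu> * snd (snd h) - a * u * (fst h + fst (snd h) + snd (snd h)) - f * fst h"
      by (simp add: inner3 Lz_def Ls_def Lm_def gg_def hh_def algebra_simps)
    also have "\<dots> = inner Lm (J h)" unfolding F3' using pos by (simp add: inner3 JE Lm_def f_def algebra_simps)
    finally show ?thesis by simp
  qed
  define a1 where "a1 = q + f"
  define a2 where "a2 = q * f - m * hh + k * p"
  define a3 where "a3 = k * (p * f - m * gg)"
  have mg: "m * gg = (\<mu> - \<delta>) * a / \<mu> + c * (\<eta> + \<delta>) / \<mu>"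
  proof -
    have "m * gg = (\<mu> - \<delta>) * a / \<mu> + c * (a / \<mu> * (\<nu> * \<gamma>)) / \<mu>"
      using pos by (simp add: m_def gg_def field_simps)
    then show ?thesis by (simp only: F3')
  qed
  have pfmg: "p * f - m * gg = b + a * \<delta> / \<mu>"
    unfolding mg using pos by (simp add: p_def f_def cab field_simps)
  have pfmg0: "p * f - m * gg > 0" unfolding pfmg using a0 b0 pos by (simp add: add_pos_nonneg)
  have mh: "m * hh = (\<mu> - \<delta>) * a * u + c * (\<eta> + \<delta>) * u"
  proof -
    have "m * hh = (\<mu> - \<delta>) * a * u + c * (a / \<mu> * (\<nu> * \<gamma>)) * u"
      using pos by (simp add: m_def hh_def field_simps)
    then show ?thesis by (simp only: F3')
  qed
  have D1: "q * f - m * hh = u * (b * \<mu> + a * \<delta>) + \<delta> * (\<mu> + \<eta> + \<delta>)"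
    unfolding mh by (simp add: q_def f_def cab algebra_simps)
  have D10: "q * f - m * hh > 0" unfolding D1 using u0 a0 b0 pos by (simp add: add_pos_pos)
  have A1: "a1 > 0" using q0 f0 by (simp add: a1_def)
  have A3: "a3 > 0" using k0 pfmg0 by (simp add: a3_def)
  have A12: "a1 * a2 - a3 > 0"
  proof -
    have "a1 * a2 - a3 = (q + f) * (q * f - m * hh) + k * p * q + k * m * gg"
      by (simp add: a1_def a2_def a3_def algebra_simps)
    moreover have "(q + f) * (q * f - m * hh) > 0" using q0 f0 D10 by simp
    moreover have "k * p * q > 0" "k * m * gg > 0" using k0 p0 q0 m0 gg0 by simp_all
    ultimately show ?thesis by linarith
  qed
  obtain l where l0: "l > 0" and B1: "a1 - 3*l > 0" and B3: "a3 - a2*l + a1*l^2 - l^3 > 0"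
    and B12: "(a1 - 3*l) * (a2 - 2*a1*l + 3*l^2) - (a3 - a2*l + a1*l^2 - l^3) > 0"
    using exists_shift[OF A1 A3 A12] by blast
  define b1 where "b1 = a1 - 3*l"
  define b2 where "b2 = a2 - 2*a1*l + 3*l^2"
  define b3 where "b3 = a3 - a2*l + a1*l^2 - l^3"
  have b10: "b1 > 0" and b30: "b3 > 0" and b120: "b1 * b2 - b3 > 0"
    using B1 B3 B12 by (simp_all add: b1_def b2_def b3_def)
  define Ly2 where "Ly2 = l *\<^sub>R Lz - k *\<^sub>R Ls"
  define Ly3 where "Ly3 = (l^2 - k * p) *\<^sub>R Lz + (k * (q - 2 * l)) *\<^sub>R Ls + (k * m) *\<^sub>R Lm"
  define La where "La = Ly3 + b1 *\<^sub>R Ly2"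
  define Lb where "Lb = b1 *\<^sub>R Lz + Ly2"
  define wa where "wa = b1 / 2"
  define wb where "wb = b3 / 2"
  define wc where "wc = (b1 * b2 - b3) / 2"
  have Vform: "Vq wa wb wc La Lb Ly2 h = b1 / 2 * (y3 + b1 * y2)^2 + b3 / 2 * (b1 * y1 + y2)^2 + (b1 * b2 - b3) / 2 * y2^2"
    if "y1 = inner Lz h" "y2 = l * inner Lz h - k * inner Ls h"
      "y3 = (l^2 - k * p) * inner Lz h + k * (q - 2 * l) * inner Ls h + k * m * inner Lm h" for h y1 y2 y3
    using that by (simp add: Vq_def La_def Lb_def Ly2_def Ly3_def wa_def wb_def wc_def inner_add_left inner_diff_left)
  have Vpos: "Vq wa wb wc La Lb Ly2 h > 0" if h: "h \<noteq> 0" for h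
  proof -
    define y1 where "y1 = inner Lz h"
    define y2 where "y2 = l * inner Lz h - k * inner Ls h"
    define y3 where "y3 = (l^2 - k * p) * inner Lz h + k * (q - 2 * l) * inner Ls h + k * m * inner Lm h"
    have V: "Vq wa wb wc La Lb Ly2 h = b1 / 2 * (y3 + b1 * y2)^2 + b3 / 2 * (b1 * y1 + y2)^2 + (b1 * b2 - b3) / 2 * y2^2"
      by (rule Vform) (simp_all add: y1_def y2_def y3_def)
    have t: "0 \<le> b1 / 2 * (y3 + b1 * y2)^2" "0 \<le> b3 / 2 * (b1 * y1 + y2)^2" "0 \<le> (b1 * b2 - b3) / 2 * y2^2"
      using b10 b30 b120 by simp_all
    show ?thesis
    proof (rule ccontr)
      assume "\<not> ?thesis"
      then have z: "b1 / 2 * (y3 + b1 * y2)^2 = 0" "b3 / 2 * (b1 * y1 + y2)^2 = 0" "(b1 * b2 - b3) / 2 * y2^2 = 0"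
        using V t by linarith+
      then have "y2 = 0" using b120 by simp
      moreover have "b1 * y1 + y2 = 0" using z b30 by simp
      moreover have "y3 + b1 * y2 = 0" using z b10 by simp
      ultimately have y0: "y1 = 0" "y2 = 0" "y3 = 0" using b10 by auto
      have Z0: "inner Lz h = 0" using y0 by (simp add: y1_def)
      have S0: "inner Ls h = 0" using y0 Z0 k0 by (simp add: y2_def)
      have M0: "inner Lm h = 0" using y0 Z0 S0 k0 m0 by (simp add: y3_def)
      have "fst h = 0" using M0 by (simp add: inner3 Lm_def)
      moreover have "snd (snd h) = 0" using Z0 \<open>fst h = 0\<close> pos by (simp add: inner3 Lz_def)
      moreover have "fst (snd h) = 0" using S0 \<open>fst h = 0\<close> \<open>snd (snd h) = 0\<close> by (simp add: inner3 Ls_def)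
      ultimately show False using h R3_nz by blast
    qed
  qed
  have Vneg: "Dq wa wb wc La Lb Ly2 h (J h) < 0" if h: "h \<noteq> 0" for h
  proof -
    define Z where "Z = inner Lz h"
    define Sx where "Sx = inner Ls h"
    define M where "M = inner Lm h"
    define y1 where "y1 = Z"
    define y2 where "y2 = l * Z - k * Sx"
    define y3 where "y3 = (l^2 - k * p) * Z + k * (q - 2 * l) * Sx + k * m * M"
    define ZJ where "ZJ = - k * Sx"
    define SJ where "SJ = p * Z - q * Sx - m * M"
    define MJ where "MJ = gg * Z - hh * Sx - f * M"
    have ZJ: "inner Lz (J h) = ZJ" by (simp add: iZ ZJ_def Sx_def)
    have SJ: "inner Ls (J h) = SJ" by (simp add: iS SJ_def Z_def Sx_def M_def)
    have MJ: "inner Lm (J h) = MJ" by (simp add: iM MJ_def Z_def Sx_def M_def)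
    note cid = companion_id[OF a1_def a2_def a3_def b1_def b2_def b3_def y1_def y2_def y3_def ZJ_def SJ_def MJ_def]
    have j1: "inner Lz (J h) = y2 - l * y1" using cid(1) ZJ by simp
    have j2: "inner Ly2 (J h) = y3 - l * y2" using cid(2) ZJ SJ by (simp add: Ly2_def inner_diff_left)
    have j3: "inner Ly3 (J h) = - b3 * y1 - b2 * y2 - b1 * y3 - l * y3"
      using cid(3) ZJ SJ MJ by (simp add: Ly3_def inner_add_left)
    have h1: "inner Lz h = y1" by (simp add: y1_def Z_def)
    have h2: "inner Ly2 h = y2" by (simp add: Ly2_def inner_diff_left y2_def Z_def Sx_def)
    have h3: "inner Ly3 h = y3" by (simp add: Ly3_def inner_add_left y3_def Z_def Sx_def M_def)
    have "Dq wa wb wc La Lb Ly2 h (J h) =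
        2 * (b1 / 2 * (y3 + b1 * y2) * ((- b3 * y1 - b2 * y2 - b1 * y3 - l * y3) + b1 * (y3 - l * y2))
        + b3 / 2 * (b1 * y1 + y2) * (b1 * (y2 - l * y1) + (y3 - l * y2))
        + (b1 * b2 - b3) / 2 * y2 * (y3 - l * y2))"
      unfolding Dq_def La_def Lb_def wa_def wb_def wc_def
      by (simp only: inner_add_left inner_scaleR_left j1 j2 j3 h1 h2 h3)
    also have "\<dots> = - b1 * (b1 * b2 - b3) * y2^2 - 2 * l * (b1 / 2 * (y3 + b1 * y2)^2 + b3 / 2 * (b1 * y1 + y2)^2 + (b1 * b2 - b3) / 2 * y2^2)"
      by (rule lyap_id)
    also have "b1 / 2 * (y3 + b1 * y2)^2 + b3 / 2 * (b1 * y1 + y2)^2 + (b1 * b2 - b3) / 2 * y2^2 = Vq wa wb wc La Lb Ly2 h"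
      by (rule Vform[symmetric]) (simp_all add: y1_def y2_def y3_def Z_def Sx_def M_def)
    finally have DV: "Dq wa wb wc La Lb Ly2 h (J h) = - b1 * (b1 * b2 - b3) * y2^2 - 2 * l * Vq wa wb wc La Lb Ly2 h" .
    have "0 \<le> b1 * (b1 * b2 - b3) * y2^2" using b10 b120 by simp
    moreover have "0 < 2 * l * Vq wa wb wc La Lb Ly2 h" using l0 Vpos[OF h] by simp
    ultimately show ?thesis unfolding DV by linarith
  qed
  obtain L where L: "L > 0" and lip: "\<forall>x\<in>cball (Ms, As, Us) 1. \<forall>y\<in>cball (Ms, As, Us) 1.
      norm (Phi2 r \<rho> \<sigma> \<mu> \<delta> \<nu> \<eta> \<gamma> x - Phi2 r \<rho> \<sigma> \<mu> \<delta> \<nu> \<eta> \<gamma> y) \<le> L * norm (x - y)"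
    using Phi2_lip[OF r pos g0, of 1 "(Ms, As, Us)"] by auto
  have "loc_asym_stable_in S (Phi2 r \<rho> \<sigma> \<mu> \<delta> \<nu> \<eta> \<gamma>) (Ms, As, Us)"
  proof (rule quad_stable[where J=J and wa=wa and La=La and wb=wb and Lb=Lb and wc=wc and Lc=Ly2 and R=1 and L=L])
    show "Phi2 r \<rho> \<sigma> \<mu> \<delta> \<nu> \<eta> \<gamma> (Ms, As, Us) = 0" by (rule Feq)
    show "(Phi2 r \<rho> \<sigma> \<mu> \<delta> \<nu> \<eta> \<gamma> has_derivative J) (at (Ms, As, Us))" unfolding J_def by (rule Phi2_deriv)
    show "(1::real) > 0" "L > 0" using L by auto
    show "\<And>x y. x \<in> cball (Ms, As, Us) 1 \<Longrightarrow> y \<in> cball (Ms, As, Us) 1 \<Longrightarrow>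
        norm (Phi2 r \<rho> \<sigma> \<mu> \<delta> \<nu> \<eta> \<gamma> x - Phi2 r \<rho> \<sigma> \<mu> \<delta> \<nu> \<eta> \<gamma> y) \<le> L * norm (x - y)"
      using lip by blast
    show "\<And>h. h \<noteq> 0 \<Longrightarrow> Vq wa wb wc La Lb Ly2 h > 0" by (rule Vpos)
    show "\<And>h. h \<noteq> 0 \<Longrightarrow> Dq wa wb wc La Lb Ly2 h (J h) < 0" by (rule Vneg)
  qed
  then show ?thesis using orth E2eq by simp
qed

theorem part_ii_E0_unstable:
  assumes r: "0 < r" "r < 1" and pos: "\<rho> > 0" "\<sigma> > 0" "\<mu> > 0" "\<delta> > 0" "\<nu> > 0" "\<eta> > 0" and g: "\<gamma> \<ge> 1"
    and N1: "N_M r \<rho> \<mu> \<delta> \<nu> \<eta> \<gamma> > 1"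
  shows "\<not> stable_in orthant (Phi2 r \<rho> \<sigma> \<mu> \<delta> \<nu> \<eta> \<gamma>) (0,0,0)"
proof -
  have g0: "\<gamma> > 0" using g by simp
  define T where "T = \<mu> + \<eta> + \<delta>"
  define Cc where "Cc = r * \<rho> * \<nu> * \<gamma>"
  define s where "s = sqrt ((\<mu> - \<eta> - \<delta>)^2 + 4 * Cc)"
  define lp where "lp = (- T + s) / 2"
  define lm where "lm = (- T - s) / 2"
  have C0: "Cc > 0" using r pos g0 by (simp add: Cc_def)
  have CN: "Cc > \<mu> * (\<eta> + \<delta>)" using N1 pos unfolding N_M_def Cc_def
    by (simp add: less_divide_eq mult_ac add_pos_pos add.commute)
  have arg: "0 \<le> (\<mu> - \<eta> - \<delta>)^2 + 4 * Cc" using C0 by (intro add_nonneg_nonneg) auto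
  have s2: "s^2 = (\<mu> - \<eta> - \<delta>)^2 + 4 * Cc" unfolding s_def using arg by simp
  have s0: "s \<ge> 0" unfolding s_def using arg by simp
  have sabs: "s \<ge> \<bar>\<mu> - \<eta> - \<delta>\<bar>"
  proof -
    have "sqrt ((\<mu> - \<eta> - \<delta>)^2) \<le> s" unfolding s_def using C0 by (intro real_sqrt_le_mono) simp
    then show ?thesis by simp
  qed
  have spos: "s > 0"
  proof -
    have "s^2 > 0" using s2 C0 by (simp add: add_nonneg_pos)
    then show ?thesis using s0 by (simp add: zero_less_power2)
  qed
  have sT: "s > T"
  proof -
    have "s^2 - T^2 = 4 * (Cc - \<mu> * (\<eta> + \<delta>))" unfolding s2 T_def by (simp add: power2_eq_square algebra_simps)
    then have "T^2 < s^2" using CN by simp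
    then show ?thesis using s0 by (simp add: power_less_imp_less_base)
  qed
  have lp0: "lp > 0" using sT by (simp add: lp_def)
  have lm0: "lm < 0" using s0 pos by (simp add: lm_def T_def)
  have lmmu: "lm + \<mu> \<le> 0" using order_trans[OF abs_ge_self sabs] unfolding lm_def T_def by (simp add: field_simps)
  have lpm: "lp - lm = s" by (simp add: lp_def lm_def field_simps)
  have charp: "lp^2 + T * lp + \<mu> * (\<eta> + \<delta>) - Cc = 0"
  proof -
    have "lp^2 + T * lp = (s^2 - T^2) / 4" by (simp add: lp_def power2_eq_square field_simps)
    also have "\<dots> = Cc - \<mu> * (\<eta> + \<delta>)" unfolding s2 T_def by (simp add: power2_eq_square field_simps)
    finally show ?thesis by simp
  qed
  have charm: "lm^2 + T * lm + \<mu> * (\<eta> + \<delta>) - Cc = 0"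
  proof -
    have "lm^2 + T * lm = (s^2 - T^2) / 4" by (simp add: lm_def power2_eq_square field_simps)
    also have "\<dots> = Cc - \<mu> * (\<eta> + \<delta>)" unfolding s2 T_def by (simp add: power2_eq_square field_simps)
    finally show ?thesis by simp
  qed
  define J where "J = Jp r \<rho> \<sigma> \<mu> \<delta> \<nu> \<eta> \<gamma> (0,0,0)"
  define Lp where "Lp = (\<nu> * \<gamma>, 0::real, lp + \<mu>)"
  define Lq where "Lq = (\<nu> * \<gamma>, 0::real, lm + \<mu>)"
  define LA where "LA = (0::real, 1::real, 0::real)"
  have eigp: "inner Lp (J h) = lp * inner Lp h" for h
  proof -
    have "inner Lp (J h) - lp * inner Lp h = - (lp^2 + T * lp + \<mu> * (\<eta> + \<delta>) - Cc) * snd (snd h)"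
      by (simp add: J_def Jp0 inner3 Lp_def T_def Cc_def power2_eq_square algebra_simps)
    then show ?thesis using charp by simp
  qed
  have eigm: "inner Lq (J h) = lm * inner Lq h" for h
  proof -
    have "inner Lq (J h) - lm * inner Lq h = - (lm^2 + T * lm + \<mu> * (\<eta> + \<delta>) - Cc) * snd (snd h)"
      by (simp add: J_def Jp0 inner3 Lq_def T_def Cc_def power2_eq_square algebra_simps)
    then show ?thesis using charm by simp
  qed
  define \<beta> where "\<beta> = (1 - r) * \<rho> + \<eta>"
  define w where "w = (lp + \<mu> + \<beta>) / s"
  have AJ: "inner LA (J h) = - \<delta> * inner LA h - ((1 - w) * inner Lp h + w * inner Lq h)" for h
  proof -
    have pq: "inner Lp h - inner Lq h = s * snd (snd h)" using lpm by (simp add: inner3 Lp_def Lq_def algebra_simps)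
    have "(1 - w) * inner Lp h + w * inner Lq h = inner Lp h - w * (inner Lp h - inner Lq h)" by (simp add: algebra_simps)
    also have "\<dots> = inner Lp h - (lp + \<mu> + \<beta>) * snd (snd h)" unfolding pq using spos by (simp add: w_def)
    also have "\<dots> = \<nu> * \<gamma> * fst h - \<beta> * snd (snd h)" by (simp add: inner3 Lp_def algebra_simps)
    finally have e: "(1 - w) * inner Lp h + w * inner Lq h = \<nu> * \<gamma> * fst h - \<beta> * snd (snd h)" .
    show ?thesis unfolding e by (simp add: J_def Jp0 inner3 LA_def \<beta>_def algebra_simps)
  qed
  obtain \<kappa> where k0: "\<kappa> > 0" and kH: "\<And>X Y Z Q0. Q0 \<ge> lp * X^2 + (- lm) * Y^2 \<and> (X \<noteq> 0 \<or> Y \<noteq> 0 \<or> Z \<noteq> 0)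
           \<Longrightarrow> Q0 + \<kappa> * \<delta> * Z^2 + \<kappa> * Z * ((1 - w) * X + w * Y) > 0"
    using mix[of lp "- lm" \<delta> "1 - w" w] lp0 lm0 pos by auto
  obtain L where L: "L > 0" and lip: "\<forall>x\<in>cball (0,0,0) 1. \<forall>y\<in>cball (0,0,0) 1.
      norm (Phi2 r \<rho> \<sigma> \<mu> \<delta> \<nu> \<eta> \<gamma> x - Phi2 r \<rho> \<sigma> \<mu> \<delta> \<nu> \<eta> \<gamma> y) \<le> L * norm (x - y)"
    using Phi2_lip[OF r pos g0, of 1 "(0,0,0)"] by auto
  show ?thesis
  proof (rule quad_unstable[where J=J and wa=1 and La=Lp and wb="-1" and Lb=Lq and wc="- \<kappa>" and Lc=LA and R=1 and L=L])
    show "Phi2 r \<rho> \<sigma> \<mu> \<delta> \<nu> \<eta> \<gamma> (0,0,0) = 0" by (rule Phi2_zero)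
    show "(Phi2 r \<rho> \<sigma> \<mu> \<delta> \<nu> \<eta> \<gamma> has_derivative J) (at (0,0,0))" unfolding J_def by (rule Phi2_deriv)
    show "(1::real) > 0" "L > 0" using L by auto
    show "\<And>x y. x \<in> cball (0,0,0) 1 \<Longrightarrow> y \<in> cball (0,0,0) 1 \<Longrightarrow>
        norm (Phi2 r \<rho> \<sigma> \<mu> \<delta> \<nu> \<eta> \<gamma> x - Phi2 r \<rho> \<sigma> \<mu> \<delta> \<nu> \<eta> \<gamma> y) \<le> L * norm (x - y)"
      using lip by blast
  next
    fix h :: R3 assume h: "h \<noteq> 0"
    define X where "X = inner Lp h"
    define Y where "Y = inner Lq h"
    define Z where "Z = inner LA h"
    have nz: "X \<noteq> 0 \<or> Y \<noteq> 0 \<or> Z \<noteq> 0"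
    proof (rule ccontr)
      assume "\<not> ?thesis"
      then have X0: "X = 0" and Y0: "Y = 0" and Z0: "Z = 0" by auto
      have "s * snd (snd h) = X - Y" using lpm by (simp add: X_def Y_def inner3 Lp_def Lq_def algebra_simps)
      then have U0: "snd (snd h) = 0" using X0 Y0 spos by simp
      have "\<nu> * \<gamma> * fst h = 0" using X0 U0 by (simp add: X_def inner3 Lp_def)
      then have M0: "fst h = 0" using pos g0 by simp
      have A0: "fst (snd h) = 0" using Z0 by (simp add: Z_def inner3 LA_def)
      show False using R3_nz[OF h] U0 M0 A0 by blast
    qed
    have main: "lp * X^2 + (- lm) * Y^2 + \<kappa> * \<delta> * Z^2 + \<kappa> * Z * ((1 - w) * X + w * Y) > 0"
      using kH nz by blast
    have "Dq 1 (- 1) (- \<kappa>) Lp Lq LA h (J h) = 2 * (lp * X^2 + (- lm) * Y^2 + \<kappa> * \<delta> * Z^2 + \<kappa> * Z * ((1 - w) * X + w * Y))"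
      by (simp add: Dq_def eigp eigm AJ X_def Y_def Z_def power2_eq_square algebra_simps)
    then show "Dq 1 (- 1) (- \<kappa>) Lp Lq LA h (J h) > 0" using main by simp
  next
    fix d :: real assume d: "d > 0"
    define v0 where "v0 = (- (lm + \<mu>), 0::real, \<nu> * \<gamma>)"
    define t where "t = d / (2 * (norm v0 + 1))"
    have t0: "t > 0" using d by (simp add: t_def add_nonneg_pos)
    define y where "y = t *\<^sub>R v0"
    have yo: "y \<in> orthant" using t0 lmmu pos g0 by (simp add: y_def v0_def orthant_def)
    have "norm y = t * norm v0" using t0 by (simp add: y_def)
    also have "\<dots> < d"
    proof -
      have "t * norm v0 = d * (norm v0 / (2 * (norm v0 + 1)))" by (simp add: t_def)
      also have "norm v0 / (2 * (norm v0 + 1)) < 1"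
      proof -
        define n0 where "n0 = norm v0"
        have nv: "0 \<le> n0" by (simp add: n0_def)
        have den: "0 < 2 * (n0 + 1)" using nv by simp
        have "n0 < 2 * (n0 + 1)" using nv by simp
        then have "n0 / (2 * (n0 + 1)) < 1" using den by (simp add: divide_less_eq_1_pos)
        then show ?thesis by (simp add: n0_def)
      qed
      then have "d * (norm v0 / (2 * (norm v0 + 1))) < d * 1" using d by (intro mult_strict_left_mono) auto
      finally show ?thesis by simp
    qed
    finally have ny: "norm (y - (0,0,0)) < d" by (simp add: zero_prod_def[symmetric])
    have qy: "inner Lq y = 0" by (simp add: y_def v0_def Lq_def inner3 algebra_simps)
    have py: "inner Lp y = t * (\<nu> * \<gamma> * s)" using lpm by (simp add: y_def v0_def Lp_def inner3 algebra_simps)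
    have Ay: "inner LA y = 0" by (simp add: y_def v0_def LA_def inner3)
    have "Vq 1 (- 1) (- \<kappa>) Lp Lq LA (y - (0,0,0)) = (t * (\<nu> * \<gamma> * s))^2"
      by (simp add: Vq_def qy py Ay zero_prod_def[symmetric])
    moreover have "t * (\<nu> * \<gamma> * s) > 0" using t0 pos g0 spos by simp
    ultimately have "Vq 1 (- 1) (- \<kappa>) Lp Lq LA (y - (0,0,0)) > 0" by (metis zero_less_power2 less_irrefl)
    then show "\<exists>y\<in>orthant. norm (y - (0,0,0)) < d \<and> Vq 1 (- 1) (- \<kappa>) Lp Lq LA (y - (0,0,0)) > 0"
      using yo ny by blast
  qed
qed

lemma traj:
  assumes d: "\<delta> > 0"
  shows "is_sol (Phi2 r \<rho> \<sigma> \<mu> \<delta> \<nu> \<eta> \<gamma>) (\<lambda>t. (0, exp (- \<delta> * t), 0)) {0..}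
    \<and> (\<lambda>t::real. (0::real, exp (- \<delta> * t), 0::real)) 0 \<in> orthant
    \<and> (\<lambda>t::real. (0::real, exp (- \<delta> * t), 0::real)) 0 \<noteq> (0, 0, 0)
    \<and> ((\<lambda>t. (0::real, exp (- \<delta> * t), 0::real)) \<longlongrightarrow> (0, 0, 0)) at_top"
proof (intro conjI)
  show "is_sol (Phi2 r \<rho> \<sigma> \<mu> \<delta> \<nu> \<eta> \<gamma>) (\<lambda>t. (0, exp (- \<delta> * t), 0)) {0..}"
    unfolding is_sol_def
  proof (intro conjI ballI)
    fix t :: real
    have "((\<lambda>t. (0::real, exp (- \<delta> * t), 0::real)) has_vector_derivative (0, - \<delta> * exp (- \<delta> * t), 0)) (at t within {0..})"
      by (auto intro!: derivative_eq_intros simp: has_real_derivative_iff_has_vector_derivative[symmetric])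
    moreover have "Phi2 r \<rho> \<sigma> \<mu> \<delta> \<nu> \<eta> \<gamma> (0, exp (- \<delta> * t), 0) = (0, - \<delta> * exp (- \<delta> * t), 0)"
      by (simp add: Phi2_def)
    ultimately show "((\<lambda>t. (0, exp (- \<delta> * t), 0)) has_vector_derivative Phi2 r \<rho> \<sigma> \<mu> \<delta> \<nu> \<eta> \<gamma> (0, exp (- \<delta> * t), 0)) (at t within {0..})"
      by simp
  qed (auto simp: is_interval_ci)
  show "(\<lambda>t::real. (0::real, exp (- \<delta> * t), 0::real)) 0 \<in> orthant" by (simp add: orthant_def)
  show "(\<lambda>t::real. (0::real, exp (- \<delta> * t), 0::real)) 0 \<noteq> (0, 0, 0)" by simp
  show "((\<lambda>t. (0::real, exp (- \<delta> * t), 0::real)) \<longlongrightarrow> (0, 0, 0)) at_top"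
    by (intro tendsto_Pair tendsto_const exp_to_0 d)
qed

theorem proposition3:
  fixes r \<rho> \<sigma> \<mu> \<delta> \<nu> \<eta> \<gamma> :: real
  assumes "0 < r" "r < 1" "\<rho> > 0" "\<sigma> > 0" "\<mu> > 0" "\<delta> > 0" "\<nu> > 0" "\<eta> > 0"
    and "\<gamma> \<ge> 1" "\<mu> \<ge> \<delta>"
  defines "F \<equiv> Phi2 r \<rho> \<sigma> \<mu> \<delta> \<nu> \<eta> \<gamma>"
  shows "(N_M r \<rho> \<mu> \<delta> \<nu> \<eta> \<gamma> < 1 \<longrightarrow> loc_asym_stable_in orthant F (0, 0, 0))
    \<and> (N_M r \<rho> \<mu> \<delta> \<nu> \<eta> \<gamma> > 1 \<and> theta_M r \<mu> \<delta> \<nu> \<eta> \<gamma> > 1 \<longrightarrow>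
         E2 r \<rho> \<sigma> \<mu> \<delta> \<nu> \<eta> \<gamma> \<in> orthant
       \<and> loc_asym_stable_in orthant F (E2 r \<rho> \<sigma> \<mu> \<delta> \<nu> \<eta> \<gamma>)
       \<and> \<not> stable_in orthant F (0, 0, 0)
       \<and> (\<exists>x. is_sol F x {0..} \<and> x 0 \<in> orthant \<and> x 0 \<noteq> (0, 0, 0)
              \<and> (x \<longlongrightarrow> (0, 0, 0)) at_top))"
proof (intro conjI impI)
  assume "N_M r \<rho> \<mu> \<delta> \<nu> \<eta> \<gamma> < 1"
  then show "loc_asym_stable_in orthant F (0, 0, 0)"
    unfolding F_def using part_i assms(1-9) by blast
next
  assume H: "1 < N_M r \<rho> \<mu> \<delta> \<nu> \<eta> \<gamma> \<and> 1 < theta_M r \<mu> \<delta> \<nu> \<eta> \<gamma>"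
  have E: "E2 r \<rho> \<sigma> \<mu> \<delta> \<nu> \<eta> \<gamma> \<in> orthant \<and> loc_asym_stable_in orthant (Phi2 r \<rho> \<sigma> \<mu> \<delta> \<nu> \<eta> \<gamma>) (E2 r \<rho> \<sigma> \<mu> \<delta> \<nu> \<eta> \<gamma>)"
    using part_ii_E2[of r \<rho> \<sigma> \<mu> \<delta> \<nu> \<eta> \<gamma>] assms(1-10) H by blast
  then show "E2 r \<rho> \<sigma> \<mu> \<delta> \<nu> \<eta> \<gamma> \<in> orthant" by blast
  show "loc_asym_stable_in orthant F (E2 r \<rho> \<sigma> \<mu> \<delta> \<nu> \<eta> \<gamma>)" using E unfolding F_def by blast
  show "\<not> stable_in orthant F (0, 0, 0)"
    unfolding F_def using part_ii_E0_unstable[of r \<rho> \<sigma> \<mu> \<delta> \<nu> \<eta> \<gamma>] assms(1-9) H by blast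
  show "\<exists>x. is_sol F x {0..} \<and> x 0 \<in> orthant \<and> x 0 \<noteq> (0, 0, 0) \<and> (x \<longlongrightarrow> (0, 0, 0)) at_top"
    unfolding F_def using traj[OF assms(6), of r \<rho> \<sigma> \<mu> \<nu> \<eta> \<gamma>] by blast
qed

end
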